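(* Let $D\ge2$, $\alpha_1,\dots,\alpha_{D+1}>0$, $\lambda_1,\dots,\lambda_{D+1}\ge0$ with $\lambda^+=\sum_i\lambda_i>0$. Let the following be mutually independent: $Y_i\sim\chi^2_{2\alpha_i}$ ($i=1,\dots,D+1$); $M_i\sim\mathrm{Poisson}(\lambda_i/2)$ ($i=1,\dots,D+1$); and an i.i.d. family $\{F_{i,j}: i=1,\dots,D+1,\ j\ge1\}$ with $F_{i,j}\sim\chi^2_2$. Set $Y'_i=Y_i+\sum_{j=1}^{M_i}F_{i,j}$ (so $Y'_i\sim\chi'^2_{2\alpha_i}(\lambda_i)$ independently), $Y^+=\sum_iY_i$, $P_i=\sum_{j=1}^{M_i}F_{i,j}$, $P^+=\sum_{i=1}^{D+1}P_i$, $M^+=\sum_iM_i$, $Y'^+=\sum_i Y'_i$, and $\underline X'=(Y'_1/Y'^+,\dots,Y'_D/Y'^+)\sim\mathrm{NcDir}^D(\underline\alpha,\underline\lambda)$. Define $$W=\frac{Y^+}{Y^++P^+},\qquad \underline X=\Big(\frac{Y_1}{Y^+},\dots,\frac{Y_D}{Y^+}\Big),\qquad \underline X'_{pnc}=\Big(\frac{P_1}{P^+},\dots,\frac{P_D}{P^+}\Big),$$ with the convention $\underline X'_{pnc}=\underline 0$ when $M^+=0$. Then $$\underline X'=W\,\underline X+(1-W)\,\underline X'_{pnc},$$ where: (i) $\underline X$ and $(W,\underline X'_{pnc})$ are independent and $\underline X\sim\mathrm{Dir}^D(\alpha_1,\dots,\alpha_{D+1})$; (ii) $W$ and $\underline X'_{pnc}$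 are conditionally independent given $M^+$, with $W\mid M^+\sim\mathrm{Beta}(\alpha^+,M^+)$ (where $\alpha^+=\sum_i\alpha_i$), and, conditionally on $(M_1,\dots,M_{D+1})$, $\underline X'_{pnc}\sim\mathrm{Dir}^D(M_1,\dots,M_{D+1})$, so that the conditional law of $\underline X'_{pnc}$ given $M^+=m$ is the mixture $\sum_{j^+\le m}\frac{m!}{j_1!\cdots j_D!(m-j^+)!}\prod_{i=1}^D(\lambda_i/\lambda^+)^{j_i}(\lambda_{D+1}/\lambda^+)^{m-j^+}\,\mathrm{Dir}^D(j_1,\dots,j_D,m-j^+)$ (the case $\underline\alpha=\underline 0$ of the conditional density in Proposition 1).
   Context: $\mathrm{Dir}^D(a_1,\dots,a_{D+1})$ is the law of $(Z_1/Z^+,\dots,Z_D/Z^+)$ for independent $Z_i\sim\chi^2_{2a_i}$, $Z^+=\sum_{i=1}^{D+1}Z_i$; when some parameters $a_i$ equal $0$ it is understood in this degenerate sense (the corresponding $Z_i=0$, hence the corresponding component is $0$). $\mathrm{Beta}(a,0)$ is the point mass at $1$. $\chi'^2_g(\lambda)$ is the non-central chi-squared law; $\mathrm{NcDir}^D(\underline\alpha,\underline\lambda)$ is the law of $(Y'_1/Y'^+,\dots,Y'_D/Y'^+)$ for independent $Y'_i\sim\chi'^2_{2\alpha_i}(\lambda_i)$. The sum over $j^+\le m$ runs over $(j_1,\dots,j_D)\in\mathbb N_0^D$ with $j_1+\dots+j_D\le m$. *)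

theory Defs
  imports "HOL-Probability.Probability"
begin

text \<open>Chi-squared law with 2a degrees of freedom (a \<ge> 0); for a = 0 it is the point mass at 0.\<close>
definition chi2_density :: "real \<Rightarrow> real \<Rightarrow> real" where
  "chi2_density a x = (if 0 < x then x powr (a - 1) * exp (- x / 2) / (2 powr a * Gamma a) else 0)"

definition chi2_measure :: "real \<Rightarrow> real measure" where
  "chi2_measure a = (if a = 0 then return borel 0 else density lborel (\<lambda>x. ennreal (chi2_density a x)))"

definition dirichlet_measure :: "nat \<Rightarrow> (nat \<Rightarrow> real) \<Rightarrow> (nat \<Rightarrow> real) measure" where
  "dirichlet_measure D a =
     distr (PiM {..D} (\<lambda>i. chi2_measure (a i))) (PiM {..<D} (\<lambda>_. borel))
       (\<lambda>z. \<lambda>i\<in>{..<D}. z i / (\<Sum>k\<le>D. z k))"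

definition beta_measure :: "real \<Rightarrow> real \<Rightarrow> real measure" where
  "beta_measure a b = (if b = 0 then return borel 1 else
     density lborel (\<lambda>x. ennreal (if 0 < x \<and> x < 1
        then x powr (a - 1) * (1 - x) powr (b - 1) / Beta a b else 0)))"

text \<open>Index type for the mutually independent family (Y_i), (M_i), (F_{i,j}).\<close>
datatype src = SY nat | SM nat | SF nat nat

end

theory Submission
  imports Defs
begin

lemma chi2_density_meas[measurable]: "chi2_density a \<in> borel_measurable borel"
  unfolding chi2_density_def[abs_def] by measurable

lemma chi2_density_nonneg: "0 < a \<Longrightarrow> 0 \<le> chi2_density a x"
  unfolding chi2_density_def using Gamma_real_pos[of a] by auto

lemma chi2_density_nonpos: "x \<le> 0 \<Longrightarrow> chi2_density a x = 0"
  unfolding chi2_density_def by auto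

definition bdens :: "real \<Rightarrow> real \<Rightarrow> real \<Rightarrow> real" where
  "bdens a b x = (if 0 < x \<and> x < 1 then x powr (a - 1) * (1 - x) powr (b - 1) / Beta a b else 0)"

lemma bdens_meas[measurable]: "bdens a b \<in> borel_measurable borel"
  unfolding bdens_def[abs_def] by measurable

lemma key_identity:
  fixes a b s x :: real
  assumes a: "0 < a" and b: "0 < b" and s: "0 < s"
  shows "s * chi2_density a (s * x) * chi2_density b (s - s * x) = chi2_density (a + b) s * bdens a b x"
proof (cases "0 < x \<and> x < 1")
  case True
  then have x: "0 < x" "x < 1" by auto
  have sx: "0 < s * x" using s x by simp
  have sx2: "0 < s - s * x" using s x by (simp add: algebra_simps)
  have G: "Gamma a > 0" "Gamma b > 0" "Gamma (a+b) > 0" using a b by (auto intro: Gamma_real_pos)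
  have e: "exp (- (s * x) / 2) * exp (- (s - s * x) / 2) = exp (- s / 2)"
    by (subst exp_add[symmetric]) (simp add: field_simps)
  have p1: "(s * x) powr (a - 1) = s powr (a - 1) * x powr (a - 1)" using s x by (simp add: powr_mult)
  have p2: "(s - s * x) powr (b - 1) = s powr (b - 1) * (1 - x) powr (b - 1)"
    using s x by (subst powr_mult[symmetric]) (auto simp: algebra_simps)
  have p3: "s * s powr (a - 1) * s powr (b - 1) = s powr (a + b - 1)"
    using s by (simp add: powr_add[symmetric] powr_diff)
  have p4: "2 powr (a + b) = 2 powr a * (2::real) powr b" by (simp add: powr_add)
  show ?thesis
    using sx sx2 s x G
    unfolding chi2_density_def bdens_def Beta_def
    apply (simp add: p1 p2 p4)
    apply (subst p3[symmetric])
    apply (simp add: field_simps e[symmetric])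
    apply (subst exp_add[symmetric])
    apply (rule arg_cong[where f=exp])
    apply (simp add: field_simps)
    done
next
  case False
  then have "x \<le> 0 \<or> 1 \<le> x" by auto
  then show ?thesis
  proof
    assume "x \<le> 0" then have "s * x \<le> 0" using s by (simp add: mult_nonneg_nonpos)
    then show ?thesis using False by (simp add: chi2_density_nonpos bdens_def del: de_Morgan_conj not_less)
  next
    assume "1 \<le> x" then have "s * 1 \<le> s * x" using s by (intro mult_left_mono) auto
    then have "s - s * x \<le> 0" by simp
    then show ?thesis using False by (simp add: chi2_density_nonpos bdens_def del: de_Morgan_conj not_less)
  qed
qed


lemma sets_chi2[simp]: "sets (chi2_measure a) = sets borel"
  by (simp add: chi2_measure_def)

lemma space_chi2[simp]: "space (chi2_measure a) = UNIV"
  by (simp add: chi2_measure_def)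

lemma sets_beta[simp]: "sets (beta_measure a b) = sets borel"
  by (simp add: beta_measure_def)

lemma beta_pos_def: "b \<noteq> 0 \<Longrightarrow> beta_measure a b = density lborel (\<lambda>x. ennreal (bdens a b x))"
  by (simp add: beta_measure_def bdens_def[abs_def])

lemma emeasure_chi2_pos:
  assumes "0 < c" "A \<in> sets borel"
  shows "emeasure (chi2_measure c) A = (\<integral>\<^sup>+x. ennreal (chi2_density c x * indicator A x) \<partial>lborel)"
  using assms by (auto simp: chi2_measure_def emeasure_density indicator_def intro!: nn_integral_cong)

lemma emeasure_beta_pos:
  assumes "b \<noteq> 0" "B \<in> sets borel"
  shows "emeasure (beta_measure a b) B = (\<integral>\<^sup>+x. ennreal (bdens a b x * indicator B x) \<partial>lborel)"
  using assms by (auto simp: beta_pos_def emeasure_density indicator_def intro!: nn_integral_cong)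

lemma chi2_beta_rect:
  fixes a b :: real
  assumes a: "0 < a" and b: "0 < b" and sf: "sigma_finite_measure (chi2_measure b)"
    and A[measurable]: "A \<in> sets borel" and B[measurable]: "B \<in> sets borel"
  shows "emeasure (chi2_measure a \<Otimes>\<^sub>M chi2_measure b)
     {p \<in> space (borel \<Otimes>\<^sub>M borel). fst p + snd p \<in> A \<and> fst p / (fst p + snd p) \<in> B}
     = emeasure (chi2_measure (a + b)) A * emeasure (beta_measure a b) B"
proof -
  let ?f = chi2_density
  define E where "E = {p \<in> space (borel \<Otimes>\<^sub>M borel). fst p + snd p \<in> A \<and> fst p / (fst p + snd p) \<in> B}"
  have E[measurable]: "E \<in> sets (borel \<Otimes>\<^sub>M borel)" unfolding E_def by measurable
  define G where "G u v = ?f a u * ?f b v * indicator A (u + v) * indicator B (u / (u + v))" for u v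
  have G_meas[measurable]: "(\<lambda>(u, v). G u v) \<in> borel_measurable (borel \<Otimes>\<^sub>M borel)"
    unfolding G_def by measurable
  define K where "K = (\<integral>\<^sup>+x. ennreal (bdens a b x * indicator B x) \<partial>lborel)"
  have "emeasure (chi2_measure a \<Otimes>\<^sub>M chi2_measure b) E
      = (\<integral>\<^sup>+u. \<integral>\<^sup>+v. indicator E (u, v) \<partial>chi2_measure b \<partial>chi2_measure a)"
  proof -
    have "E \<in> sets (chi2_measure a \<Otimes>\<^sub>M chi2_measure b)" using E by (subst sets_pair_measure_cong[OF sets_chi2 sets_chi2])
    then show ?thesis by (rule sigma_finite_measure.emeasure_pair_measure[OF sf])
  qed
  also have "\<dots> = (\<integral>\<^sup>+u. ennreal (?f a u) * (\<integral>\<^sup>+v. ennreal (?f b v) * indicator E (u, v) \<partial>lborel) \<partial>lborel)"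
  proof -
    have 1: "(\<integral>\<^sup>+v. indicator E (u, v) \<partial>chi2_measure b) = (\<integral>\<^sup>+v. ennreal (chi2_density b v) * indicator E (u, v) \<partial>lborel)" for u
      using b unfolding chi2_measure_def by (simp add: nn_integral_density)
    have "(\<integral>\<^sup>+u. \<integral>\<^sup>+v. indicator E (u, v) \<partial>chi2_measure b \<partial>chi2_measure a) = (\<integral>\<^sup>+u. (\<integral>\<^sup>+v. ennreal (chi2_density b v) * indicator E (u, v) \<partial>lborel) \<partial>chi2_measure a)"
      by (simp add: 1)
    also have "\<dots> = (\<integral>\<^sup>+u. ennreal (chi2_density a u) * (\<integral>\<^sup>+v. ennreal (chi2_density b v) * indicator E (u, v) \<partial>lborel) \<partial>lborel)"
      using a unfolding chi2_measure_def apply simp apply (rule nn_integral_density) by measurable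
    finally show ?thesis .
  qed
  also have "\<dots> = (\<integral>\<^sup>+u. \<integral>\<^sup>+v. ennreal (G u v) \<partial>lborel \<partial>lborel)"
  proof (intro nn_integral_cong)
    fix u :: real
    have "ennreal (?f a u) * (\<integral>\<^sup>+v. ennreal (?f b v) * indicator E (u, v) \<partial>lborel)
        = (\<integral>\<^sup>+v. ennreal (?f a u) * (ennreal (?f b v) * indicator E (u, v)) \<partial>lborel)"
      by (rule nn_integral_cmult[symmetric]) measurable
    also have "\<dots> = (\<integral>\<^sup>+v. ennreal (G u v) \<partial>lborel)"
      using a b by (intro nn_integral_cong)
        (auto simp: G_def E_def indicator_def ennreal_mult'[symmetric] chi2_density_nonneg space_pair_measure)
    finally show "ennreal (?f a u) * (\<integral>\<^sup>+v. ennreal (?f b v) * indicator E (u, v) \<partial>lborel)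
        = (\<integral>\<^sup>+v. ennreal (G u v) \<partial>lborel)" .
  qed
  also have "\<dots> = (\<integral>\<^sup>+u. \<integral>\<^sup>+s. ennreal (G u (s - u)) \<partial>lborel \<partial>lborel)"
  proof -
    have aff: "(\<integral>\<^sup>+v. ennreal (G u v) \<partial>lborel) = (\<integral>\<^sup>+s. ennreal (G u (s - u)) \<partial>lborel)" for u
      using nn_integral_real_affine[of "\<lambda>v. ennreal (G u v)" 1 "-u"] by simp
    show ?thesis by (simp add: aff)
  qed
  also have "\<dots> = (\<integral>\<^sup>+s. \<integral>\<^sup>+u. ennreal (G u (s - u)) \<partial>lborel \<partial>lborel)"
    by (rule lborel_pair.Fubini'[symmetric]) (simp add: case_prod_unfold cong: measurable_cong_sets)
  also have "\<dots> = (\<integral>\<^sup>+s. ennreal (?f (a + b) s * indicator A s) * K \<partial>lborel)"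
  proof (intro nn_integral_cong)
    fix s :: real
    show "(\<integral>\<^sup>+u. ennreal (G u (s - u)) \<partial>lborel) = ennreal (?f (a + b) s * indicator A s) * K"
    proof (cases "0 < s")
      case True
      have "(\<integral>\<^sup>+u. ennreal (G u (s - u)) \<partial>lborel) = ennreal s * (\<integral>\<^sup>+x. ennreal (G (s * x) (s - s * x)) \<partial>lborel)"
        using nn_integral_real_affine[of "\<lambda>u. ennreal (G u (s - u))" s 0] True by simp
      also have "\<dots> = (\<integral>\<^sup>+x. ennreal s * ennreal (G (s * x) (s - s * x)) \<partial>lborel)"
        by (rule nn_integral_cmult[symmetric]) measurable
      also have "\<dots> = (\<integral>\<^sup>+x. ennreal (?f (a + b) s * indicator A s) * ennreal (bdens a b x * indicator B x) \<partial>lborel)"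
      proof (intro nn_integral_cong)
        fix x :: real
        have "s * G (s * x) (s - s * x) = (s * ?f a (s * x) * ?f b (s - s * x)) * indicator A s * indicator B x"
          using True by (simp add: G_def)
        also have "\<dots> = (?f (a + b) s * indicator A s) * (bdens a b x * indicator B x)"
          using key_identity[OF a b True, of x] by simp
        finally have *: "s * G (s * x) (s - s * x) = (?f (a + b) s * indicator A s) * (bdens a b x * indicator B x)" .
        have "ennreal s * ennreal (G (s * x) (s - s * x)) = ennreal (s * G (s * x) (s - s * x))"
          using True by (simp add: ennreal_mult')
        also have "\<dots> = ennreal (?f (a + b) s * indicator A s) * ennreal (bdens a b x * indicator B x)"
          unfolding * using a b by (intro ennreal_mult') (auto intro!: mult_nonneg_nonneg chi2_density_nonneg)
        finally show "ennreal s * ennreal (G (s * x) (s - s * x)) = ennreal (?f (a + b) s * indicator A s) * ennreal (bdens a b x * indicator B x)" .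
      qed
      also have "\<dots> = ennreal (?f (a + b) s * indicator A s) * K"
        unfolding K_def by (rule nn_integral_cmult) measurable
      finally show ?thesis .
    next
      case False
      have "G u (s - u) = 0" for u
      proof (cases "u \<le> 0")
        case True then show ?thesis by (simp add: G_def chi2_density_nonpos)
      next
        case False2: False
        then have "s - u \<le> 0" using False by simp
        then show ?thesis by (simp add: G_def chi2_density_nonpos)
      qed
      then show ?thesis using False by (simp add: chi2_density_nonpos)
    qed
  qed
  also have "\<dots> = (\<integral>\<^sup>+s. ennreal (?f (a + b) s * indicator A s) \<partial>lborel) * K"
    by (rule nn_integral_multc) measurable
  also have "\<dots> = emeasure (chi2_measure (a + b)) A * emeasure (beta_measure a b) B"
    using a b by (simp add: emeasure_chi2_pos emeasure_beta_pos K_def)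
  finally show ?thesis unfolding E_def .
qed


definition (in prob_space) indep2 :: "'b measure \<Rightarrow> ('a \<Rightarrow> 'b) \<Rightarrow> 'c measure \<Rightarrow> ('a \<Rightarrow> 'c) \<Rightarrow> bool" where
  "indep2 S X T Y \<longleftrightarrow> random_variable S X \<and> random_variable T Y \<and>
     (\<forall>A\<in>sets S. \<forall>B\<in>sets T. prob {\<omega>\<in>space M. X \<omega> \<in> A \<and> Y \<omega> \<in> B} = prob {\<omega>\<in>space M. X \<omega> \<in> A} * prob {\<omega>\<in>space M. Y \<omega> \<in> B})"

lemma (in prob_space) indep2D:
  assumes "indep2 S X T Y" "A \<in> sets S" "B \<in> sets T"
  shows "prob {\<omega>\<in>space M. X \<omega> \<in> A \<and> Y \<omega> \<in> B} = prob {\<omega>\<in>space M. X \<omega> \<in> A} * prob {\<omega>\<in>space M. Y \<omega> \<in> B}"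
  using assms unfolding indep2_def by auto

lemma (in prob_space) indep2_rv:
  assumes "indep2 S X T Y" shows "random_variable S X" "random_variable T Y"
  using assms unfolding indep2_def by auto

lemma (in prob_space) indep2I:
  assumes "random_variable S X" "random_variable T Y"
    "\<And>A B. A \<in> sets S \<Longrightarrow> B \<in> sets T \<Longrightarrow> prob {\<omega>\<in>space M. X \<omega> \<in> A \<and> Y \<omega> \<in> B} = prob {\<omega>\<in>space M. X \<omega> \<in> A} * prob {\<omega>\<in>space M. Y \<omega> \<in> B}"
  shows "indep2 S X T Y"
  using assms unfolding indep2_def by auto

lemma (in prob_space) indep_var_imp_indep2:
  assumes "indep_var S X T Y" shows "indep2 S X T Y"
proof (rule indep2I)
  show "random_variable S X" "random_variable T Y" using assms by (auto dest: indep_var_rv1 indep_var_rv2)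
  fix A B assume "A \<in> sets S" "B \<in> sets T"
  have "prob {\<omega>\<in>space M. X \<omega> \<in> A \<and> Y \<omega> \<in> B} = prob ((\<lambda>x. (X x, Y x)) -` (A \<times> B) \<inter> space M)"
    by (intro arg_cong[where f=prob]) auto
  also have "\<dots> = prob (X -` A \<inter> space M) * prob (Y -` B \<inter> space M)"
    by (rule indep_varD[OF assms \<open>A \<in> sets S\<close> \<open>B \<in> sets T\<close>])
  also have "\<dots> = prob {\<omega>\<in>space M. X \<omega> \<in> A} * prob {\<omega>\<in>space M. Y \<omega> \<in> B}"
    by (intro arg_cong2[where f="(*)"] arg_cong[where f=prob]) auto
  finally show "prob {\<omega>\<in>space M. X \<omega> \<in> A \<and> Y \<omega> \<in> B} = prob {\<omega>\<in>space M. X \<omega> \<in> A} * prob {\<omega>\<in>space M. Y \<omega> \<in> B}" .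
qed

lemma (in prob_space) indep2_gen:
  assumes X: "random_variable S X" and Y: "random_variable T Y"
    and G1: "sets S = sigma_sets (space S) G1" "Int_stable G1"
    and G2: "sets T = sigma_sets (space T) G2" "Int_stable G2"
    and G1s: "G1 \<subseteq> sets S" and G2s: "G2 \<subseteq> sets T"
    and ind: "\<And>A B. A \<in> G1 \<Longrightarrow> B \<in> G2 \<Longrightarrow>
       prob {\<omega>\<in>space M. X \<omega> \<in> A \<and> Y \<omega> \<in> B} = prob {\<omega>\<in>space M. X \<omega> \<in> A} * prob {\<omega>\<in>space M. Y \<omega> \<in> B}"
  shows "indep2 S X T Y"
proof -
  have eqS: "{X -` A \<inter> space M | A. A \<in> sets S} = sigma_sets (space M) {X -` A \<inter> space M | A. A \<in> G1}"
    unfolding G1(1) by (rule sigma_sets_vimage_commute) (use X in \<open>auto simp: measurable_def\<close>)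
  have eqT: "{Y -` A \<inter> space M | A. A \<in> sets T} = sigma_sets (space M) {Y -` A \<inter> space M | A. A \<in> G2}"
    unfolding G2(1) by (rule sigma_sets_vimage_commute) (use Y in \<open>auto simp: measurable_def\<close>)
  have I: "indep_set (sigma_sets (space M) {X -` A \<inter> space M | A. A \<in> G1}) (sigma_sets (space M) {Y -` A \<inter> space M | A. A \<in> G2})"
  proof (intro indep_set_sigma_sets indep_setI)
    show "{X -` A \<inter> space M |A. A \<in> G1} \<subseteq> events" using X G1s by (auto simp: measurable_def)
    show "{Y -` A \<inter> space M |A. A \<in> G2} \<subseteq> events" using Y G2s by (auto simp: measurable_def)
    show "Int_stable {X -` A \<inter> space M |A. A \<in> G1}"
      using G1(2) unfolding Int_stable_def by (auto, metis vimage_Int Int_assoc inf.commute inf.left_idem inf_left_commute)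
    show "Int_stable {Y -` A \<inter> space M |A. A \<in> G2}"
      using G2(2) unfolding Int_stable_def by (auto, metis vimage_Int Int_assoc inf.commute inf.left_idem inf_left_commute)
  next
    fix a b assume "a \<in> {X -` A \<inter> space M |A. A \<in> G1}" "b \<in> {Y -` A \<inter> space M |A. A \<in> G2}"
    then obtain A B where "a = X -` A \<inter> space M" "A \<in> G1" "b = Y -` B \<inter> space M" "B \<in> G2" by auto
    moreover have "X -` A \<inter> space M \<inter> (Y -` B \<inter> space M) = {\<omega>\<in>space M. X \<omega> \<in> A \<and> Y \<omega> \<in> B}"
      "X -` A \<inter> space M = {\<omega>\<in>space M. X \<omega> \<in> A}" "Y -` B \<inter> space M = {\<omega>\<in>space M. Y \<omega> \<in> B}" by auto
    ultimately show "prob (a \<inter> b) = prob a * prob b" using ind by simp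
  qed
  show ?thesis
  proof (rule indep2I[OF X Y])
    fix A B assume A: "A \<in> sets S" and B: "B \<in> sets T"
    have a: "X -` A \<inter> space M \<in> sigma_sets (space M) {X -` A \<inter> space M | A. A \<in> G1}"
      using A eqS by blast
    have b: "Y -` B \<inter> space M \<in> sigma_sets (space M) {Y -` A \<inter> space M | A. A \<in> G2}"
      using B eqT by blast
    have "X -` A \<inter> space M \<inter> (Y -` B \<inter> space M) = {\<omega>\<in>space M. X \<omega> \<in> A \<and> Y \<omega> \<in> B}"
      "X -` A \<inter> space M = {\<omega>\<in>space M. X \<omega> \<in> A}" "Y -` B \<inter> space M = {\<omega>\<in>space M. Y \<omega> \<in> B}" by auto
    with indep_setD[OF I a b] show "prob {\<omega>\<in>space M. X \<omega> \<in> A \<and> Y \<omega> \<in> B} = prob {\<omega>\<in>space M. X \<omega> \<in> A} * prob {\<omega>\<in>space M. Y \<omega> \<in> B}"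
      by simp
  qed
qed

lemma (in prob_space) indep2_pairR:
  assumes X: "random_variable S X" and Y: "random_variable T Y" and Z: "random_variable U Z"
    and ind: "\<And>A B C. A \<in> sets S \<Longrightarrow> B \<in> sets T \<Longrightarrow> C \<in> sets U \<Longrightarrow>
       prob {\<omega>\<in>space M. X \<omega> \<in> A \<and> Y \<omega> \<in> B \<and> Z \<omega> \<in> C} = prob {\<omega>\<in>space M. X \<omega> \<in> A} * prob {\<omega>\<in>space M. Y \<omega> \<in> B \<and> Z \<omega> \<in> C}"
  shows "indep2 S X (T \<Otimes>\<^sub>M U) (\<lambda>\<omega>. (Y \<omega>, Z \<omega>))"
proof (rule indep2_gen[OF X _ _ _ _ _ _ _ ])
  show "random_variable (T \<Otimes>\<^sub>M U) (\<lambda>\<omega>. (Y \<omega>, Z \<omega>))" using Y Z by measurable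
  show "sets S = sigma_sets (space S) (sets S)" by (simp add: sets.sigma_sets_eq)
  show "Int_stable (sets S)" by (auto simp: Int_stable_def)
  show "sets (T \<Otimes>\<^sub>M U) = sigma_sets (space (T \<Otimes>\<^sub>M U)) {a \<times> b | a b. a \<in> sets T \<and> b \<in> sets U}"
    by (simp add: sets_pair_measure space_pair_measure)
  show "Int_stable {a \<times> b | a b. a \<in> sets T \<and> b \<in> sets U}" by (rule Int_stable_pair_measure_generator)
  show "sets S \<subseteq> sets S" by simp
  show "{a \<times> b | a b. a \<in> sets T \<and> b \<in> sets U} \<subseteq> sets (T \<Otimes>\<^sub>M U)" by auto
next
  fix A D assume A: "A \<in> sets S" and "D \<in> {a \<times> b | a b. a \<in> sets T \<and> b \<in> sets U}"
  then obtain B C where D: "D = B \<times> C" and B: "B \<in> sets T" and C: "C \<in> sets U" by auto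
  show "prob {\<omega>\<in>space M. X \<omega> \<in> A \<and> (Y \<omega>, Z \<omega>) \<in> D} = prob {\<omega>\<in>space M. X \<omega> \<in> A} * prob {\<omega>\<in>space M. (Y \<omega>, Z \<omega>) \<in> D}"
    using ind[OF A B C] unfolding D by simp
qed

lemma (in prob_space) indep2_symm:
  assumes "indep2 S X T Y" shows "indep2 T Y S X"
  using assms unfolding indep2_def by (auto simp: conj_commute mult.commute)

lemma (in prob_space) indep2_pairL:
  assumes X: "random_variable S X" and Y: "random_variable T Y" and Z: "random_variable U Z"
    and ind: "\<And>A B C. A \<in> sets S \<Longrightarrow> B \<in> sets T \<Longrightarrow> C \<in> sets U \<Longrightarrow>
       prob {\<omega>\<in>space M. X \<omega> \<in> A \<and> Y \<omega> \<in> B \<and> Z \<omega> \<in> C} = prob {\<omega>\<in>space M. X \<omega> \<in> A \<and> Y \<omega> \<in> B} * prob {\<omega>\<in>space M. Z \<omega> \<in> C}"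
  shows "indep2 (S \<Otimes>\<^sub>M T) (\<lambda>\<omega>. (X \<omega>, Y \<omega>)) U Z"
proof (rule indep2_symm, rule indep2_pairR[OF Z X Y])
  fix A B C assume "A \<in> sets U" "B \<in> sets S" "C \<in> sets T"
  from ind[OF this(2,3,1)] show "prob {\<omega>\<in>space M. Z \<omega> \<in> A \<and> X \<omega> \<in> B \<and> Y \<omega> \<in> C} = prob {\<omega>\<in>space M. Z \<omega> \<in> A} * prob {\<omega>\<in>space M. X \<omega> \<in> B \<and> Y \<omega> \<in> C}"
    by (simp add: conj_commute conj_left_commute mult.commute)
qed

lemma (in prob_space) indep2_compose:
  assumes ind: "indep2 S X T Y" and f[measurable]: "f \<in> measurable S S'" and g[measurable]: "g \<in> measurable T T'"
  shows "indep2 S' (\<lambda>\<omega>. f (X \<omega>)) T' (\<lambda>\<omega>. g (Y \<omega>))"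
proof -
  have X[measurable]: "random_variable S X" and Y[measurable]: "random_variable T Y" using indep2_rv[OF ind] by auto
  show ?thesis
  proof (rule indep2I)
    show "random_variable S' (\<lambda>\<omega>. f (X \<omega>))" "random_variable T' (\<lambda>\<omega>. g (Y \<omega>))" by measurable
    fix A B assume A: "A \<in> sets S'" and B: "B \<in> sets T'"
    have A': "f -` A \<inter> space S \<in> sets S" using A by measurable
    have B': "g -` B \<inter> space T \<in> sets T" using B by measurable
    have 1: "{\<omega>\<in>space M. f (X \<omega>) \<in> A \<and> g (Y \<omega>) \<in> B} = {\<omega>\<in>space M. X \<omega> \<in> f -` A \<inter> space S \<and> Y \<omega> \<in> g -` B \<inter> space T}"
      using measurable_space[OF X] measurable_space[OF Y] by auto
    have 2: "{\<omega>\<in>space M. f (X \<omega>) \<in> A} = {\<omega>\<in>space M. X \<omega> \<in> f -` A \<inter> space S}"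
      using measurable_space[OF X] by auto
    have 3: "{\<omega>\<in>space M. g (Y \<omega>) \<in> B} = {\<omega>\<in>space M. Y \<omega> \<in> g -` B \<inter> space T}"
      using measurable_space[OF Y] by auto
    show "prob {\<omega>\<in>space M. f (X \<omega>) \<in> A \<and> g (Y \<omega>) \<in> B} = prob {\<omega>\<in>space M. f (X \<omega>) \<in> A} * prob {\<omega>\<in>space M. g (Y \<omega>) \<in> B}"
      unfolding 1 2 3 by (rule indep2D[OF ind A' B'])
  qed
qed


lemma (in prob_space) indep2_triA:
  assumes XY: "indep2 S X T Y" and XYZ: "indep2 (S \<Otimes>\<^sub>M T) (\<lambda>\<omega>. (X \<omega>, Y \<omega>)) U Z"
  shows "indep2 S X (T \<Otimes>\<^sub>M U) (\<lambda>\<omega>. (Y \<omega>, Z \<omega>))"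
proof -
  have X[measurable]: "random_variable S X" and Y[measurable]: "random_variable T Y" using indep2_rv[OF XY] by auto
  have Z[measurable]: "random_variable U Z" using indep2_rv[OF XYZ] by auto
  show ?thesis
  proof (rule indep2_pairR[OF X Y Z])
    fix A B C assume A[measurable]: "A \<in> sets S" and B[measurable]: "B \<in> sets T" and C[measurable]: "C \<in> sets U"
    have "prob {\<omega>\<in>space M. X \<omega> \<in> A \<and> Y \<omega> \<in> B \<and> Z \<omega> \<in> C} = prob {\<omega>\<in>space M. (X \<omega>, Y \<omega>) \<in> A \<times> B \<and> Z \<omega> \<in> C}"
      by (intro arg_cong[where f=prob]) auto
    also have "\<dots> = prob {\<omega>\<in>space M. (X \<omega>, Y \<omega>) \<in> A \<times> B} * prob {\<omega>\<in>space M. Z \<omega> \<in> C}"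
      by (rule indep2D[OF XYZ]) auto
    also have "prob {\<omega>\<in>space M. (X \<omega>, Y \<omega>) \<in> A \<times> B} = prob {\<omega>\<in>space M. X \<omega> \<in> A \<and> Y \<omega> \<in> B}"
      by (intro arg_cong[where f=prob]) auto
    also have "\<dots> = prob {\<omega>\<in>space M. X \<omega> \<in> A} * prob {\<omega>\<in>space M. Y \<omega> \<in> B}"
      by (rule indep2D[OF XY A B])
    finally have 1: "prob {\<omega>\<in>space M. X \<omega> \<in> A \<and> Y \<omega> \<in> B \<and> Z \<omega> \<in> C} = prob {\<omega>\<in>space M. X \<omega> \<in> A} * prob {\<omega>\<in>space M. Y \<omega> \<in> B} * prob {\<omega>\<in>space M. Z \<omega> \<in> C}" .
    have "prob {\<omega>\<in>space M. Y \<omega> \<in> B \<and> Z \<omega> \<in> C} = prob {\<omega>\<in>space M. (X \<omega>, Y \<omega>) \<in> space S \<times> B \<and> Z \<omega> \<in> C}"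
      using measurable_space[OF X] by (intro arg_cong[where f=prob]) auto
    also have "\<dots> = prob {\<omega>\<in>space M. (X \<omega>, Y \<omega>) \<in> space S \<times> B} * prob {\<omega>\<in>space M. Z \<omega> \<in> C}"
      by (rule indep2D[OF XYZ]) auto
    also have "prob {\<omega>\<in>space M. (X \<omega>, Y \<omega>) \<in> space S \<times> B} = prob {\<omega>\<in>space M. Y \<omega> \<in> B}"
      using measurable_space[OF X] by (intro arg_cong[where f=prob]) auto
    finally have 2: "prob {\<omega>\<in>space M. Y \<omega> \<in> B \<and> Z \<omega> \<in> C} = prob {\<omega>\<in>space M. Y \<omega> \<in> B} * prob {\<omega>\<in>space M. Z \<omega> \<in> C}" .
    show "prob {\<omega>\<in>space M. X \<omega> \<in> A \<and> Y \<omega> \<in> B \<and> Z \<omega> \<in> C} = prob {\<omega>\<in>space M. X \<omega> \<in> A} * prob {\<omega>\<in>space M. Y \<omega> \<in> B \<and> Z \<omega> \<in> C}"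
      unfolding 1 2 by (simp add: mult.assoc)
  qed
qed

lemma (in prob_space) indep2_triB:
  assumes XYZ: "indep2 S X (T \<Otimes>\<^sub>M U) (\<lambda>\<omega>. (Y \<omega>, Z \<omega>))" and YZ: "indep2 T Y U Z"
  shows "indep2 (S \<Otimes>\<^sub>M T) (\<lambda>\<omega>. (X \<omega>, Y \<omega>)) U Z"
proof -
  have X[measurable]: "random_variable S X" using indep2_rv[OF XYZ] by auto
  have Y[measurable]: "random_variable T Y" and Z[measurable]: "random_variable U Z" using indep2_rv[OF YZ] by auto
  show ?thesis
  proof (rule indep2_pairL[OF X Y Z])
    fix A B C assume A[measurable]: "A \<in> sets S" and B[measurable]: "B \<in> sets T" and C[measurable]: "C \<in> sets U"
    have "prob {\<omega>\<in>space M. X \<omega> \<in> A \<and> Y \<omega> \<in> B \<and> Z \<omega> \<in> C} = prob {\<omega>\<in>space M. X \<omega> \<in> A \<and> (Y \<omega>, Z \<omega>) \<in> B \<times> C}"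
      by (intro arg_cong[where f=prob]) auto
    also have "\<dots> = prob {\<omega>\<in>space M. X \<omega> \<in> A} * prob {\<omega>\<in>space M. (Y \<omega>, Z \<omega>) \<in> B \<times> C}"
      by (rule indep2D[OF XYZ]) auto
    also have "prob {\<omega>\<in>space M. (Y \<omega>, Z \<omega>) \<in> B \<times> C} = prob {\<omega>\<in>space M. Y \<omega> \<in> B \<and> Z \<omega> \<in> C}"
      by (intro arg_cong[where f=prob]) auto
    also have "\<dots> = prob {\<omega>\<in>space M. Y \<omega> \<in> B} * prob {\<omega>\<in>space M. Z \<omega> \<in> C}"
      by (rule indep2D[OF YZ B C])
    finally have 1: "prob {\<omega>\<in>space M. X \<omega> \<in> A \<and> Y \<omega> \<in> B \<and> Z \<omega> \<in> C} = prob {\<omega>\<in>space M. X \<omega> \<in> A} * (prob {\<omega>\<in>space M. Y \<omega> \<in> B} * prob {\<omega>\<in>space M. Z \<omega> \<in> C})" .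
    have "prob {\<omega>\<in>space M. X \<omega> \<in> A \<and> Y \<omega> \<in> B} = prob {\<omega>\<in>space M. X \<omega> \<in> A \<and> (Y \<omega>, Z \<omega>) \<in> B \<times> space U}"
      using measurable_space[OF Z] by (intro arg_cong[where f=prob]) auto
    also have "\<dots> = prob {\<omega>\<in>space M. X \<omega> \<in> A} * prob {\<omega>\<in>space M. (Y \<omega>, Z \<omega>) \<in> B \<times> space U}"
      by (rule indep2D[OF XYZ]) auto
    also have "prob {\<omega>\<in>space M. (Y \<omega>, Z \<omega>) \<in> B \<times> space U} = prob {\<omega>\<in>space M. Y \<omega> \<in> B}"
      using measurable_space[OF Z] by (intro arg_cong[where f=prob]) auto
    finally have 2: "prob {\<omega>\<in>space M. X \<omega> \<in> A \<and> Y \<omega> \<in> B} = prob {\<omega>\<in>space M. X \<omega> \<in> A} * prob {\<omega>\<in>space M. Y \<omega> \<in> B}" .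
    show "prob {\<omega>\<in>space M. X \<omega> \<in> A \<and> Y \<omega> \<in> B \<and> Z \<omega> \<in> C} = prob {\<omega>\<in>space M. X \<omega> \<in> A \<and> Y \<omega> \<in> B} * prob {\<omega>\<in>space M. Z \<omega> \<in> C}"
      unfolding 1 2 by (simp add: mult.assoc)
  qed
qed

lemma (in prob_space) indep2_AE_cong:
  assumes ind: "indep2 S X T Y"
    and X'[measurable]: "random_variable S X'" and Y'[measurable]: "random_variable T Y'"
    and eX: "AE \<omega> in M. X \<omega> = X' \<omega>" and eY: "AE \<omega> in M. Y \<omega> = Y' \<omega>"
  shows "indep2 S X' T Y'"
proof -
  have X[measurable]: "random_variable S X" and Y[measurable]: "random_variable T Y" using indep2_rv[OF ind] by auto
  show ?thesis
  proof (rule indep2I[OF X' Y'])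
    fix A B assume A[measurable]: "A \<in> sets S" and B[measurable]: "B \<in> sets T"
    have 1: "prob {\<omega>\<in>space M. X' \<omega> \<in> A \<and> Y' \<omega> \<in> B} = prob {\<omega>\<in>space M. X \<omega> \<in> A \<and> Y \<omega> \<in> B}"
    proof (rule finite_measure_eq_AE)
      show "AE x in M. (x \<in> {\<omega>\<in>space M. X' \<omega> \<in> A \<and> Y' \<omega> \<in> B}) = (x \<in> {\<omega>\<in>space M. X \<omega> \<in> A \<and> Y \<omega> \<in> B})"
        using eX eY by eventually_elim auto
    qed auto
    have 2: "prob {\<omega>\<in>space M. X' \<omega> \<in> A} = prob {\<omega>\<in>space M. X \<omega> \<in> A}"
      by (rule finite_measure_eq_AE) (use eX in \<open>auto elim!: eventually_mono\<close>)
    have 3: "prob {\<omega>\<in>space M. Y' \<omega> \<in> B} = prob {\<omega>\<in>space M. Y \<omega> \<in> B}"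
      by (rule finite_measure_eq_AE) (use eY in \<open>auto elim!: eventually_mono\<close>)
    show "prob {\<omega>\<in>space M. X' \<omega> \<in> A \<and> Y' \<omega> \<in> B} = prob {\<omega>\<in>space M. X' \<omega> \<in> A} * prob {\<omega>\<in>space M. Y' \<omega> \<in> B}"
      unfolding 1 2 3 by (rule indep2D[OF ind A B])
  qed
qed

lemma (in prob_space) indep2_const:
  assumes X[measurable]: "random_variable S X" and Y[measurable]: "random_variable T Y"
    and c: "AE \<omega> in M. Y \<omega> = c"
  shows "indep2 S X T Y"
proof (rule indep2I[OF X Y])
  fix A B assume A[measurable]: "A \<in> sets S" and B[measurable]: "B \<in> sets T"
  show "prob {\<omega>\<in>space M. X \<omega> \<in> A \<and> Y \<omega> \<in> B} = prob {\<omega>\<in>space M. X \<omega> \<in> A} * prob {\<omega>\<in>space M. Y \<omega> \<in> B}"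
  proof (cases "c \<in> B")
    case True
    have 1: "prob {\<omega>\<in>space M. X \<omega> \<in> A \<and> Y \<omega> \<in> B} = prob {\<omega>\<in>space M. X \<omega> \<in> A}"
      by (rule finite_measure_eq_AE) (use c True in \<open>auto elim!: eventually_mono\<close>)
    have 2: "prob {\<omega>\<in>space M. Y \<omega> \<in> B} = prob (space M)"
      by (rule finite_measure_eq_AE) (use c True in \<open>auto elim!: eventually_mono\<close>)
    show ?thesis unfolding 1 2 by (simp add: prob_space)
  next
    case False
    have 1: "prob {\<omega>\<in>space M. X \<omega> \<in> A \<and> Y \<omega> \<in> B} = prob {}"
      by (rule finite_measure_eq_AE) (use c False in \<open>auto elim!: eventually_mono\<close>)
    have 2: "prob {\<omega>\<in>space M. Y \<omega> \<in> B} = prob {}"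
      by (rule finite_measure_eq_AE) (use c False in \<open>auto elim!: eventually_mono\<close>)
    show ?thesis unfolding 1 2 by simp
  qed
qed


lemma AE_chi2_pos: assumes "0 < a" shows "AE x in chi2_measure a. 0 < x"
proof -
  have e: "chi2_measure a = density lborel (\<lambda>x. ennreal (chi2_density a x))" using assms by (simp add: chi2_measure_def)
  have "AE x in lborel. 0 < ennreal (chi2_density a x) \<longrightarrow> 0 < x"
    by (rule AE_I2) (auto simp: chi2_density_def)
  then show ?thesis unfolding e by (subst AE_density) auto
qed

lemma AE_chi2_zero: "AE x in chi2_measure 0. x = 0"
  unfolding chi2_measure_def by (simp, subst AE_return) auto

lemma AE_chi2_nonneg: "0 \<le> a \<Longrightarrow> AE x in chi2_measure a. 0 \<le> x"
proof (cases "a = 0")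
  case True then show ?thesis using AE_chi2_zero by (auto elim: eventually_mono)
next
  case False then show "0 \<le> a \<Longrightarrow> ?thesis" using AE_chi2_pos[of a] by (auto elim: eventually_mono)
qed

lemma beta_total:
  assumes "0 < a" "0 < b" shows "emeasure (beta_measure a b) UNIV = 1"
proof -
  have "emeasure (beta_measure a b) UNIV = (\<integral>\<^sup>+x. ennreal (bdens a b x) \<partial>lborel)"
    using assms by (simp add: beta_pos_def emeasure_density)
  also have "\<dots> = (\<integral>\<^sup>+x. ennreal (indicator {0..1} x * (x powr (a - 1) * (1 - x) powr (b - 1) / Beta a b)) \<partial>lborel)"
    by (intro nn_integral_cong) (auto simp: bdens_def indicator_def)
  also have "\<dots> = ennreal 1"
  proof -
    have B: "Beta a b > 0" using assms by (simp add: Beta_def Gamma_real_pos)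
    have "((\<lambda>x. x powr (a - 1) * (1 - x) powr (b - 1) / Beta a b) has_integral Beta a b / Beta a b) {0..1}"
      by (intro has_integral_divide has_integral_Beta_real assms)
    then have "((\<lambda>x. x powr (a - 1) * (1 - x) powr (b - 1) / Beta a b) has_integral 1) {0..1}" using B by simp
    from nn_integral_has_integral_lebesgue[OF _ this] show ?thesis using B by simp
  qed
  finally show ?thesis by simp
qed

lemma (in prob_space) indep2_distr:
  assumes ind: "indep2 S X T Y"
  shows "distr M (S \<Otimes>\<^sub>M T) (\<lambda>\<omega>. (X \<omega>, Y \<omega>)) = distr M S X \<Otimes>\<^sub>M distr M T Y"
proof -
  have X[measurable]: "random_variable S X" and Y[measurable]: "random_variable T Y" using indep2_rv[OF ind] by auto
  interpret X: prob_space "distr M S X" by (rule prob_space_distr) fact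
  interpret Y: prob_space "distr M T Y" by (rule prob_space_distr) fact
  interpret XY: pair_prob_space "distr M S X" "distr M T Y" ..
  show ?thesis
  proof (rule pair_measure_eqI[symmetric])
    show "sigma_finite_measure (distr M S X)" ..
    show "sigma_finite_measure (distr M T Y)" ..
    show "sets (distr M S X \<Otimes>\<^sub>M distr M T Y) = sets (distr M (S \<Otimes>\<^sub>M T) (\<lambda>\<omega>. (X \<omega>, Y \<omega>)))"
      using sets_pair_measure_cong[OF sets_distr[of M S X] sets_distr[of M T Y]] by simp
    fix A B assume A: "A \<in> sets (distr M S X)" and B: "B \<in> sets (distr M T Y)"
    then have A': "A \<in> sets S" and B': "B \<in> sets T" by auto
    have "emeasure (distr M (S \<Otimes>\<^sub>M T) (\<lambda>\<omega>. (X \<omega>, Y \<omega>))) (A \<times> B) = emeasure M {\<omega>\<in>space M. X \<omega> \<in> A \<and> Y \<omega> \<in> B}"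
      using A' B' by (subst emeasure_distr) (auto intro!: arg_cong[where f="emeasure M"])
    also have "\<dots> = ennreal (prob {\<omega>\<in>space M. X \<omega> \<in> A} * prob {\<omega>\<in>space M. Y \<omega> \<in> B})"
      using A' B' by (simp add: emeasure_eq_measure indep2D[OF ind])
    also have "\<dots> = emeasure M {\<omega>\<in>space M. X \<omega> \<in> A} * emeasure M {\<omega>\<in>space M. Y \<omega> \<in> B}"
      by (simp add: emeasure_eq_measure ennreal_mult)
    also have "\<dots> = emeasure (distr M S X) A * emeasure (distr M T Y) B"
      using A' B' by (simp add: emeasure_distr vimage_def Int_def conj_commute)
    finally show "emeasure (distr M S X) A * emeasure (distr M T Y) B = emeasure (distr M (S \<Otimes>\<^sub>M T) (\<lambda>\<omega>. (X \<omega>, Y \<omega>))) (A \<times> B)" by simp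
  qed
qed


lemma (in prob_space) gamma_beta:
  assumes ind: "indep2 borel U borel V" and dU: "distr M borel U = chi2_measure a"
    and dV: "distr M borel V = chi2_measure b" and a: "0 \<le> a" and b: "0 \<le> b"
  shows "distr M borel (\<lambda>\<omega>. U \<omega> + V \<omega>) = chi2_measure (a + b)
    \<and> indep2 borel (\<lambda>\<omega>. U \<omega> + V \<omega>) borel (\<lambda>\<omega>. U \<omega> / (U \<omega> + V \<omega>))
    \<and> (0 < a \<longrightarrow> distr M borel (\<lambda>\<omega>. U \<omega> / (U \<omega> + V \<omega>)) = beta_measure a b)"
proof -
  have U[measurable]: "random_variable borel U" and V[measurable]: "random_variable borel V" using indep2_rv[OF ind] by auto
  consider "a = 0" | "0 < a" "b = 0" | "0 < a" "0 < b" using a b by linarith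
  then show ?thesis
  proof cases
    case 1
    have "AE x in distr M borel U. x = 0" unfolding dU 1 by (rule AE_chi2_zero)
    from AE_distrD[OF U this] have AU: "AE \<omega> in M. U \<omega> = 0" .
    have AR: "AE \<omega> in M. U \<omega> / (U \<omega> + V \<omega>) = 0" using AU by (rule eventually_mono) auto
    have "distr M borel (\<lambda>\<omega>. U \<omega> + V \<omega>) = distr M borel V"
      by (rule distr_cong_AE) (use AU in \<open>auto elim!: eventually_mono\<close>)
    moreover have "indep2 borel (\<lambda>\<omega>. U \<omega> + V \<omega>) borel (\<lambda>\<omega>. U \<omega> / (U \<omega> + V \<omega>))"
      by (rule indep2_const[OF _ _ AR]) measurable
    ultimately show ?thesis using dV 1 by simp
  next
    case 2
    have "AE x in distr M borel V. x = 0" unfolding dV 2 by (rule AE_chi2_zero)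
    from AE_distrD[OF V this] have AV: "AE \<omega> in M. V \<omega> = 0" .
    have "AE x in distr M borel U. 0 < x" unfolding dU using 2(1) by (rule AE_chi2_pos)
    from AE_distrD[OF U this] have AU0: "AE \<omega> in M. 0 < U \<omega>" .
    have AUV: "AE \<omega> in M. 0 < U \<omega> \<and> V \<omega> = 0" using AU0 AV by eventually_elim auto
    have AR: "AE \<omega> in M. U \<omega> / (U \<omega> + V \<omega>) = 1" using AUV by (rule eventually_mono) auto
    have "distr M borel (\<lambda>\<omega>. U \<omega> + V \<omega>) = distr M borel U"
      by (rule distr_cong_AE) (use AV in \<open>auto elim!: eventually_mono\<close>)
    moreover have "indep2 borel (\<lambda>\<omega>. U \<omega> + V \<omega>) borel (\<lambda>\<omega>. U \<omega> / (U \<omega> + V \<omega>))"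
      by (rule indep2_const[OF _ _ AR]) measurable
    moreover have "distr M borel (\<lambda>\<omega>. U \<omega> / (U \<omega> + V \<omega>)) = distr M borel (\<lambda>\<omega>. 1::real)"
      by (rule distr_cong_AE[OF refl refl AR]) measurable
    ultimately show ?thesis using dU 2 by (simp add: beta_measure_def)
  next
    case 3
    have pb: "prob_space (chi2_measure b)" unfolding dV[symmetric] by (rule prob_space_distr) simp
    have sf: "sigma_finite_measure (chi2_measure b)" using pb by (rule prob_space_imp_sigma_finite)
    have J: "distr M (borel \<Otimes>\<^sub>M borel) (\<lambda>\<omega>. (U \<omega>, V \<omega>)) = chi2_measure a \<Otimes>\<^sub>M chi2_measure b"
      using indep2_distr[OF ind] dU dV by simp
    have key: "emeasure M {\<omega>\<in>space M. U \<omega> + V \<omega> \<in> A \<and> U \<omega> / (U \<omega> + V \<omega>) \<in> B}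
       = emeasure (chi2_measure (a + b)) A * emeasure (beta_measure a b) B"
      if A[measurable]: "A \<in> sets borel" and B[measurable]: "B \<in> sets borel" for A B
    proof -
      have "emeasure M {\<omega>\<in>space M. U \<omega> + V \<omega> \<in> A \<and> U \<omega> / (U \<omega> + V \<omega>) \<in> B}
         = emeasure (distr M (borel \<Otimes>\<^sub>M borel) (\<lambda>\<omega>. (U \<omega>, V \<omega>)))
             {p \<in> space (borel \<Otimes>\<^sub>M borel). fst p + snd p \<in> A \<and> fst p / (fst p + snd p) \<in> B}"
      proof -
        have Em: "{p \<in> space (borel \<Otimes>\<^sub>M borel). fst p + snd p \<in> A \<and> fst p / (fst p + snd p) \<in> B} \<in> sets (borel \<Otimes>\<^sub>M borel)"
          by measurable
        show ?thesis by (subst emeasure_distr[OF _ Em]) (auto simp: space_pair_measure intro!: arg_cong[where f="emeasure M"])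
      qed
      also have "\<dots> = emeasure (chi2_measure (a + b)) A * emeasure (beta_measure a b) B"
        unfolding J by (rule chi2_beta_rect[OF 3 sf A B])
      finally show ?thesis .
    qed
    have lawS: "emeasure M {\<omega>\<in>space M. U \<omega> + V \<omega> \<in> A} = emeasure (chi2_measure (a + b)) A"
      if A[measurable]: "A \<in> sets borel" for A
      using key[OF A, of UNIV] beta_total[OF 3] by simp
    have dS: "distr M borel (\<lambda>\<omega>. U \<omega> + V \<omega>) = chi2_measure (a + b)"
      by (rule measure_eqI) (auto simp: emeasure_distr lawS vimage_def Int_def conj_commute)
    have tot: "emeasure (chi2_measure (a + b)) UNIV = 1"
      using lawS[of UNIV] emeasure_space_1 by simp
    have lawR: "emeasure M {\<omega>\<in>space M. U \<omega> / (U \<omega> + V \<omega>) \<in> B} = emeasure (beta_measure a b) B"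
      if B[measurable]: "B \<in> sets borel" for B
      using key[OF _ B, of UNIV] tot by simp
    have dR: "distr M borel (\<lambda>\<omega>. U \<omega> / (U \<omega> + V \<omega>)) = beta_measure a b"
      by (rule measure_eqI) (auto simp: emeasure_distr lawR vimage_def Int_def conj_commute)
    have I: "indep2 borel (\<lambda>\<omega>. U \<omega> + V \<omega>) borel (\<lambda>\<omega>. U \<omega> / (U \<omega> + V \<omega>))"
    proof (rule indep2I)
      fix A B :: "real set" assume A[measurable]: "A \<in> sets borel" and B[measurable]: "B \<in> sets borel"
      have "ennreal (prob {\<omega>\<in>space M. U \<omega> + V \<omega> \<in> A \<and> U \<omega> / (U \<omega> + V \<omega>) \<in> B})
          = ennreal (prob {\<omega>\<in>space M. U \<omega> + V \<omega> \<in> A}) * ennreal (prob {\<omega>\<in>space M. U \<omega> / (U \<omega> + V \<omega>) \<in> B})"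
        using key[OF A B] lawS[OF A] lawR[OF B] by (simp add: emeasure_eq_measure)
      then show "prob {\<omega>\<in>space M. U \<omega> + V \<omega> \<in> A \<and> U \<omega> / (U \<omega> + V \<omega>) \<in> B}
          = prob {\<omega>\<in>space M. U \<omega> + V \<omega> \<in> A} * prob {\<omega>\<in>space M. U \<omega> / (U \<omega> + V \<omega>) \<in> B}"
        by (simp add: ennreal_mult[symmetric])
    qed simp_all
    show ?thesis using dS dR I by simp
  qed
qed


lemma (in prob_space) chi2_sum:
  assumes fin: "finite J" and ind: "indep_vars (\<lambda>_. borel) Z J"
    and dZ: "\<And>j. j \<in> J \<Longrightarrow> distr M borel (Z j) = chi2_measure (c j)"
    and c: "\<And>j. j \<in> J \<Longrightarrow> 0 \<le> c j"
  shows "distr M borel (\<lambda>\<omega>. \<Sum>j\<in>J. Z j \<omega>) = chi2_measure (\<Sum>j\<in>J. c j)"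
  using fin ind dZ c
proof (induction J rule: finite_induct)
  case empty
  then show ?case by (simp add: chi2_measure_def)
next
  case (insert i J)
  have Zm[measurable]: "j \<in> insert i J \<Longrightarrow> random_variable borel (Z j)" for j
    using insert.prems(1) by (auto simp: indep_vars_def)
  have indJ: "indep_vars (\<lambda>_. borel) Z J" using insert.prems(1) by (rule indep_vars_subset) auto
  have IH: "distr M borel (\<lambda>\<omega>. \<Sum>j\<in>J. Z j \<omega>) = chi2_measure (\<Sum>j\<in>J. c j)"
    using insert.IH[OF indJ] insert.prems by auto
  have I: "indep2 borel (\<lambda>\<omega>. \<Sum>j\<in>J. Z j \<omega>) borel (Z i)"
    by (rule indep2_symm, rule indep_var_imp_indep2, rule indep_vars_sum[OF insert.hyps insert.prems(1)])
  have "distr M borel (\<lambda>\<omega>. (\<Sum>j\<in>J. Z j \<omega>) + Z i \<omega>) = chi2_measure ((\<Sum>j\<in>J. c j) + c i)"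
    using gamma_beta[OF I IH insert.prems(2)[of i]] insert.prems(3) by (auto intro!: sum_nonneg)
  then show ?case using insert.hyps by (simp add: add.commute)
qed


lemma cancel_helper: "(a::real) \<noteq> 0 \<Longrightarrow> a / b * (c / a) = c / b"
  by (cases "b = 0") (simp_all add: field_simps)

lemma core_alg:
  fixes z :: "nat \<Rightarrow> real"
  assumes nn: "\<And>k. k \<le> Suc D \<Longrightarrow> 0 \<le> z k"
  shows "(\<lambda>i\<in>{..<Suc D}. if i < D then ((\<Sum>k\<le>D. z k) / ((\<Sum>k\<le>D. z k) + z (Suc D))) * (z i / (\<Sum>k\<le>D. z k))
          else ((\<Sum>k\<le>D. z k) / ((\<Sum>k\<le>D. z k) + z (Suc D))) * (1 - (\<Sum>j<D. z j / (\<Sum>k\<le>D. z k))))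
       = (\<lambda>i\<in>{..<Suc D}. z i / (\<Sum>k\<le>Suc D. z k))"
proof -
  define s where "s = (\<Sum>k\<le>D. z k)"
  have tot: "(\<Sum>k\<le>Suc D. z k) = s + z (Suc D)" by (simp add: s_def)
  have sD: "s = (\<Sum>j<D. z j) + z D" unfolding s_def by (simp add: lessThan_Suc_atMost[symmetric])
  show ?thesis unfolding s_def[symmetric] tot
  proof (rule ext)
    fix i
    show "(\<lambda>i\<in>{..<Suc D}. if i < D then s / (s + z (Suc D)) * (z i / s) else s / (s + z (Suc D)) * (1 - (\<Sum>j<D. z j / s))) i
        = (\<lambda>i\<in>{..<Suc D}. z i / (s + z (Suc D))) i"
    proof (cases "i < Suc D")
      case False then show ?thesis by simp
    next
      case True
      show ?thesis
      proof (cases "s = 0")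
        case s0: True
        have "\<forall>k\<in>{..D}. z k = 0" using s0 nn unfolding s_def by (subst sum_nonneg_eq_0_iff[symmetric]) auto
        then have "z i = 0" using True by auto
        then show ?thesis using True s0 by simp
      next
        case s0: False
        show ?thesis
        proof (cases "i < D")
          case True then show ?thesis using s0 by simp
        next
          case False
          then have iD: "i = D" using \<open>i < Suc D\<close> by simp
          have e1: "1 - (\<Sum>j<D. z j / s) = (s - (\<Sum>j<D. z j)) / s"
            using s0 by (simp add: sum_divide_distrib[symmetric] diff_divide_distrib)
          have "s / (s + z (Suc D)) * (1 - (\<Sum>j<D. z j / s)) = (s - (\<Sum>j<D. z j)) / (s + z (Suc D))"
          proof (cases "s + z (Suc D) = 0")
            case True then show ?thesis by simp
          next
            case False then show ?thesis unfolding e1 using s0 by (intro cancel_helper)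
          qed
          also have "\<dots> = z D / (s + z (Suc D))" using sD by simp
          finally show ?thesis using iD by simp
        qed
      qed
    qed
  qed
qed

lemma G_meas:
  "(\<lambda>p::(nat\<Rightarrow>real)\<times>real. \<lambda>i\<in>{..<Suc D}. if i < D then snd p * fst p i else snd p * (1 - (\<Sum>j<D. fst p j)))
    \<in> measurable (PiM {..<D} (\<lambda>_. borel) \<Otimes>\<^sub>M borel) (PiM {..<Suc D} (\<lambda>_. borel))"
proof (rule measurable_restrict)
  fix i assume "i \<in> {..<Suc D}"
  show "(\<lambda>p::(nat\<Rightarrow>real)\<times>real. if i < D then snd p * fst p i else snd p * (1 - (\<Sum>j<D. fst p j))) \<in> borel_measurable (PiM {..<D} (\<lambda>_. borel) \<Otimes>\<^sub>M borel)"
  proof (cases "i < D")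
    case True
    have iD: "i \<in> {..<D}" using True by simp
    have [measurable]: "(\<lambda>r. r i) \<in> borel_measurable (PiM {..<D} (\<lambda>_. borel))" by (rule measurable_component_singleton[OF iD])
    show ?thesis using True by simp measurable
  next
    case False
    show ?thesis using False by simp measurable
  qed
qed


lemma (in prob_space) dirichlet_core:
  fixes Z :: "nat \<Rightarrow> 'a \<Rightarrow> real"
  assumes "indep_vars (\<lambda>_. borel) Z {..D}"
    and "\<And>i. i \<le> D \<Longrightarrow> distr M borel (Z i) = chi2_measure (a i)"
    and "\<And>i. i \<le> D \<Longrightarrow> 0 \<le> a i"
  shows "indep2 borel (\<lambda>\<omega>. \<Sum>k\<le>D. Z k \<omega>) (PiM {..<D} (\<lambda>_. borel)) (\<lambda>\<omega>. \<lambda>i\<in>{..<D}. Z i \<omega> / (\<Sum>k\<le>D. Z k \<omega>))"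
  using assms
proof (induction D)
  case 0
  have Zm[measurable]: "random_variable borel (Z 0)" using 0(1) by (auto simp: indep_vars_def)
  have eq: "(\<lambda>\<omega>. \<lambda>i\<in>{..<0::nat}. Z i \<omega> / (\<Sum>k\<le>0. Z k \<omega>)) = (\<lambda>\<omega>. \<lambda>_. undefined)"
    by (auto simp: restrict_def fun_eq_iff)
  have c: "(\<lambda>_. undefined) \<in> space (PiM {..<0::nat} (\<lambda>_. borel :: real measure))" by (simp add: space_PiM)
  show ?case unfolding eq by (rule indep2_const[where c="\<lambda>_. undefined"]) (use c in auto)
next
  case (Suc D)
  define S' where "S' \<omega> = (\<Sum>k\<le>D. Z k \<omega>)" for \<omega>
  define R' where "R' \<omega> = (\<lambda>i\<in>{..<D}. Z i \<omega> / S' \<omega>)" for \<omega>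
  define V where "V = Z (Suc D)"
  have Zm[measurable]: "i \<le> Suc D \<Longrightarrow> random_variable borel (Z i)" for i using Suc.prems(1) by (auto simp: indep_vars_def)
  have S'm[measurable]: "random_variable borel S'" unfolding S'_def by measurable
  have R'm[measurable]: "random_variable (PiM {..<D} (\<lambda>_. borel)) R'" unfolding R'_def by measurable
  have Vm[measurable]: "random_variable borel V" unfolding V_def by measurable
  have indD: "indep_vars (\<lambda>_. borel) Z {..D}" using Suc.prems(1) by (rule indep_vars_subset) auto
  have IH0: "indep2 borel (\<lambda>\<omega>. \<Sum>k\<le>D. Z k \<omega>) (PiM {..<D} (\<lambda>_. borel)) (\<lambda>\<omega>. \<lambda>i\<in>{..<D}. Z i \<omega> / (\<Sum>k\<le>D. Z k \<omega>))"
    by (rule Suc.IH[OF indD]) (use Suc.prems(2,3) in auto)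
  have IH: "indep2 borel S' (PiM {..<D} (\<lambda>_. borel)) R'"
    using IH0 unfolding S'_def[abs_def] R'_def[abs_def] .
  have split: "indep2 (PiM {..D} (\<lambda>_. borel)) (\<lambda>\<omega>. restrict (\<lambda>i. Z i \<omega>) {..D}) (PiM {Suc D} (\<lambda>_. borel)) (\<lambda>\<omega>. restrict (\<lambda>i. Z i \<omega>) {Suc D})"
    by (rule indep_var_imp_indep2, rule indep_var_restrict[OF Suc.prems(1)]) auto
  have sumr: "(\<Sum>k\<le>D. restrict (\<lambda>i. Z i \<omega>) {..D} k) = S' \<omega>" for \<omega>
    unfolding S'_def by (rule sum.cong) auto
  have P1: "indep2 (PiM {..<D} (\<lambda>_. borel) \<Otimes>\<^sub>M borel) (\<lambda>\<omega>. (R' \<omega>, S' \<omega>)) borel V"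
  proof -
    have "indep2 (PiM {..<D} (\<lambda>_. borel) \<Otimes>\<^sub>M borel)
       (\<lambda>\<omega>. (\<lambda>z. (\<lambda>i\<in>{..<D}. z i / (\<Sum>k\<le>D. z k), \<Sum>k\<le>D. z k)) (restrict (\<lambda>i. Z i \<omega>) {..D}))
       borel (\<lambda>\<omega>. (\<lambda>z. z (Suc D)) (restrict (\<lambda>i. Z i \<omega>) {Suc D}))"
      by (rule indep2_compose[OF split]) measurable
    then show ?thesis
    proof (rule indep2_AE_cong)
      show "AE \<omega> in M. (\<lambda>z. (\<lambda>i\<in>{..<D}. z i / (\<Sum>k\<le>D. z k), \<Sum>k\<le>D. z k)) (restrict (\<lambda>i. Z i \<omega>) {..D}) = (R' \<omega>, S' \<omega>)"
        by (rule AE_I2) (auto simp: R'_def S'_def intro!: restrict_ext)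
      show "AE \<omega> in M. (\<lambda>z. z (Suc D)) (restrict (\<lambda>i. Z i \<omega>) {Suc D}) = V \<omega>"
        by (rule AE_I2) (simp add: V_def)
    qed measurable
  qed
  have SV: "indep2 borel S' borel V"
  proof -
    have "indep2 borel (\<lambda>\<omega>. (\<lambda>z. \<Sum>k\<le>D. z k) (restrict (\<lambda>i. Z i \<omega>) {..D}))
       borel (\<lambda>\<omega>. (\<lambda>z. z (Suc D)) (restrict (\<lambda>i. Z i \<omega>) {Suc D}))"
      by (rule indep2_compose[OF split]) measurable
    then show ?thesis
    proof (rule indep2_AE_cong)
      show "AE \<omega> in M. (\<lambda>z. \<Sum>k\<le>D. z k) (restrict (\<lambda>i. Z i \<omega>) {..D}) = S' \<omega>"
        by (rule AE_I2) (simp only: sumr)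
      show "AE \<omega> in M. (\<lambda>z. z (Suc D)) (restrict (\<lambda>i. Z i \<omega>) {Suc D}) = V \<omega>"
        by (rule AE_I2) (simp add: V_def)
    qed measurable
  qed
  have P2: "indep2 (PiM {..<D} (\<lambda>_. borel)) R' (borel \<Otimes>\<^sub>M borel) (\<lambda>\<omega>. (S' \<omega>, V \<omega>))"
    by (rule indep2_triA[OF indep2_symm[OF IH] P1])
  have dS': "distr M borel S' = chi2_measure (\<Sum>k\<le>D. a k)"
    unfolding S'_def by (rule chi2_sum[OF _ indD]) (use Suc.prems in auto)
  have dV: "distr M borel V = chi2_measure (a (Suc D))" unfolding V_def using Suc.prems by auto
  have GB: "indep2 borel (\<lambda>\<omega>. S' \<omega> + V \<omega>) borel (\<lambda>\<omega>. S' \<omega> / (S' \<omega> + V \<omega>))"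
  proof -
    have a0: "0 \<le> (\<Sum>k\<le>D. a k)" using Suc.prems(3) by (auto intro!: sum_nonneg)
    have aS: "0 \<le> a (Suc D)" using Suc.prems(3) by auto
    show ?thesis using gamma_beta[OF SV dS' dV a0 aS] by simp
  qed
  define B where "B \<omega> = S' \<omega> / (S' \<omega> + V \<omega>)" for \<omega>
  define S where "S \<omega> = S' \<omega> + V \<omega>" for \<omega>
  have Bm[measurable]: "random_variable borel B" unfolding B_def by measurable
  have Sm[measurable]: "random_variable borel S" unfolding S_def by measurable
  have P3: "indep2 (PiM {..<D} (\<lambda>_. borel)) R' (borel \<Otimes>\<^sub>M borel) (\<lambda>\<omega>. (B \<omega>, S \<omega>))"
  proof -
    have "indep2 (PiM {..<D} (\<lambda>_. borel)) (\<lambda>\<omega>. id (R' \<omega>)) (borel \<Otimes>\<^sub>M borel)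
        (\<lambda>\<omega>. (\<lambda>p. (fst p / (fst p + snd p), fst p + snd p)) (S' \<omega>, V \<omega>))"
      by (rule indep2_compose[OF P2]) measurable
    then show ?thesis by (simp add: B_def S_def)
  qed
  have P4: "indep2 borel B borel S" using indep2_symm[OF GB] by (simp add: B_def[abs_def] S_def[abs_def])
  have P5: "indep2 (PiM {..<D} (\<lambda>_. borel) \<Otimes>\<^sub>M borel) (\<lambda>\<omega>. (R' \<omega>, B \<omega>)) borel S"
    by (rule indep2_triB[OF P3 P4])
  let ?G = "\<lambda>p::(nat\<Rightarrow>real)\<times>real. \<lambda>i\<in>{..<Suc D}. if i < D then snd p * fst p i else snd p * (1 - (\<Sum>j<D. fst p j))"
  have P6: "indep2 (PiM {..<Suc D} (\<lambda>_. borel)) (\<lambda>\<omega>. ?G (R' \<omega>, B \<omega>)) borel (\<lambda>\<omega>. id (S \<omega>))"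
    by (rule indep2_compose[OF P5 G_meas]) measurable
  have nn: "AE \<omega> in M. \<forall>k\<in>{..Suc D}. 0 \<le> Z k \<omega>"
  proof (rule AE_finite_allI)
    fix k assume k: "k \<in> {..Suc D}"
    have kle: "k \<le> Suc D" using k by simp
    have "AE x in distr M borel (Z k). 0 \<le> x" unfolding Suc.prems(2)[OF kle] by (rule AE_chi2_nonneg) (rule Suc.prems(3)[OF kle])
    from AE_distrD[OF Zm[OF kle] this] show "AE \<omega> in M. 0 \<le> Z k \<omega>" .
  qed simp
  have AEG: "AE \<omega> in M. ?G (R' \<omega>, B \<omega>) = (\<lambda>i\<in>{..<Suc D}. Z i \<omega> / (\<Sum>k\<le>Suc D. Z k \<omega>))"
    using nn
  proof (rule eventually_mono)
    fix \<omega> assume "\<forall>k\<in>{..Suc D}. 0 \<le> Z k \<omega>"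
    then have "\<And>k. k \<le> Suc D \<Longrightarrow> 0 \<le> Z k \<omega>" by auto
    note ca = core_alg[of D "\<lambda>k. Z k \<omega>", OF this]
    have sR: "sum (R' \<omega>) {..<D} = (\<Sum>j<D. Z j \<omega> / S' \<omega>)" by (rule sum.cong) (auto simp: R'_def)
    have e: "?G (R' \<omega>, B \<omega>) = (\<lambda>i\<in>{..<Suc D}. if i < D then B \<omega> * (Z i \<omega> / S' \<omega>) else B \<omega> * (1 - (\<Sum>j<D. Z j \<omega> / S' \<omega>)))"
      by (rule restrict_ext) (auto simp: R'_def sR)
    show "?G (R' \<omega>, B \<omega>) = (\<lambda>i\<in>{..<Suc D}. Z i \<omega> / (\<Sum>k\<le>Suc D. Z k \<omega>))"
    proof -
      have e2: "(\<lambda>i\<in>{..<Suc D}. if i < D then B \<omega> * (Z i \<omega> / S' \<omega>) else B \<omega> * (1 - (\<Sum>j<D. Z j \<omega> / S' \<omega>)))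
          = (\<lambda>i\<in>{..<Suc D}. Z i \<omega> / (\<Sum>k\<le>Suc D. Z k \<omega>))"
        using ca unfolding B_def S'_def V_def by simp
      show ?thesis by (rule trans[OF e e2])
    qed
  qed
  have AES: "AE \<omega> in M. id (S \<omega>) = (\<Sum>k\<le>Suc D. Z k \<omega>)"
    by (simp add: S_def S'_def V_def)
  show ?case
    by (rule indep2_symm, rule indep2_AE_cong[OF P6 _ _ AEG AES]) measurable
qed


lemma (in prob_space) dirichlet_law:
  fixes Z :: "nat \<Rightarrow> 'a \<Rightarrow> real"
  assumes ind: "indep_vars (\<lambda>_. borel) Z {..D}"
    and dZ: "\<And>i. i \<le> D \<Longrightarrow> distr M borel (Z i) = chi2_measure (a i)"
  shows "distr M (PiM {..<D} (\<lambda>_. borel)) (\<lambda>\<omega>. \<lambda>i\<in>{..<D}. Z i \<omega> / (\<Sum>k\<le>D. Z k \<omega>)) = dirichlet_measure D a"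
proof -
  have Zm[measurable]: "i \<le> D \<Longrightarrow> random_variable borel (Z i)" for i using ind by (auto simp: indep_vars_def)
  have "distr M (PiM {..D} (\<lambda>_. borel)) (\<lambda>\<omega>. \<lambda>i\<in>{..D}. Z i \<omega>) = PiM {..D} (\<lambda>i. distr M borel (Z i))"
    using ind by (subst (asm) indep_vars_iff_distr_eq_PiM') auto
  also have "\<dots> = PiM {..D} (\<lambda>i. chi2_measure (a i))"
    by (rule PiM_cong) (auto simp: dZ)
  finally have J: "distr M (PiM {..D} (\<lambda>_. borel)) (\<lambda>\<omega>. \<lambda>i\<in>{..D}. Z i \<omega>) = PiM {..D} (\<lambda>i. chi2_measure (a i))" .
  have fm[measurable]: "(\<lambda>z. \<lambda>i\<in>{..<D}. z i / (\<Sum>k\<le>D. z k)) \<in> measurable (PiM {..D} (\<lambda>_. borel)) (PiM {..<D} (\<lambda>_. borel :: real measure))"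
    by measurable
  have "dirichlet_measure D a = distr (distr M (PiM {..D} (\<lambda>_. borel)) (\<lambda>\<omega>. \<lambda>i\<in>{..D}. Z i \<omega>)) (PiM {..<D} (\<lambda>_. borel))
      (\<lambda>z. \<lambda>i\<in>{..<D}. z i / (\<Sum>k\<le>D. z k))"
    unfolding J dirichlet_measure_def ..
  also have "\<dots> = distr M (PiM {..<D} (\<lambda>_. borel)) (\<lambda>\<omega>. (\<lambda>z. \<lambda>i\<in>{..<D}. z i / (\<Sum>k\<le>D. z k)) (\<lambda>i\<in>{..D}. Z i \<omega>))"
    by (subst distr_distr) (auto simp: comp_def)
  also have "\<dots> = distr M (PiM {..<D} (\<lambda>_. borel)) (\<lambda>\<omega>. \<lambda>i\<in>{..<D}. Z i \<omega> / (\<Sum>k\<le>D. Z k \<omega>))"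
  proof (rule distr_cong)
    fix \<omega> show "(\<lambda>z. \<lambda>i\<in>{..<D}. z i / (\<Sum>k\<le>D. z k)) (\<lambda>i\<in>{..D}. Z i \<omega>) = (\<lambda>i\<in>{..<D}. Z i \<omega> / (\<Sum>k\<le>D. Z k \<omega>))"
    proof -
      have "(\<Sum>k\<le>D. (\<lambda>i\<in>{..D}. Z i \<omega>) k) = (\<Sum>k\<le>D. Z k \<omega>)" by (rule sum.cong) auto
      then show ?thesis by (auto intro!: restrict_ext)
    qed
  qed auto
  finally show ?thesis ..
qed


definition Tset :: "nat \<Rightarrow> nat \<Rightarrow> (nat \<Rightarrow> nat) set" where
  "Tset D m = {j::nat\<Rightarrow>nat. (\<forall>i\<ge>D. j i = 0) \<and> (\<Sum>i<D. j i) \<le> m}"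

lemma Tset_finite: "finite (Tset D m)"
proof -
  have sub: "Tset D m \<subseteq> {f. \<forall>x. (x \<in> {..<D} \<longrightarrow> f x \<in> {..m}) \<and> (x \<notin> {..<D} \<longrightarrow> f x = 0)}"
  proof
    fix f assume f: "f \<in> Tset D m"
    have "f x \<le> m" if "x < D" for x
    proof -
      have "f x \<le> (\<Sum>i<D. f i)" using that by (intro member_le_sum) auto
      then show ?thesis using f by (auto simp: Tset_def)
    qed
    then show "f \<in> {f. \<forall>x. (x \<in> {..<D} \<longrightarrow> f x \<in> {..m}) \<and> (x \<notin> {..<D} \<longrightarrow> f x = 0)}"
      using f by (auto simp: Tset_def)
  qed
  have fin: "finite {f. \<forall>x. (x \<in> {..<D} \<longrightarrow> f x \<in> {..m}) \<and> (x \<notin> {..<D} \<longrightarrow> (f x :: nat) = 0)}"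
    by (rule finite_set_of_finite_funs) auto
  show ?thesis by (rule finite_subset[OF sub fin])
qed

lemma alg_helper:
  fixes A P B C E Q X Yv :: real
  assumes "P \<noteq> 0" "B \<noteq> 0" "C \<noteq> 0" "E \<noteq> 0"
  shows "A / (P * B * E) * (Q * X) * Yv = (A / (B * C)) * X * (C / (P * E) * Q * Yv)"
  using assms by (simp add: field_simps)

lemma Tset_Suc_bij:
  "bij_betw (\<lambda>(t, j). j(D := t)) (SIGMA t:{..m}. Tset D (m - t)) (Tset (Suc D) m)"
proof (rule bij_betwI[where g="\<lambda>j. (j D, j(D := 0))"])
  show "(\<lambda>(t, j). j(D := t)) \<in> (SIGMA t:{..m}. Tset D (m - t)) \<rightarrow> Tset (Suc D) m"
  proof (rule Pi_I)
    fix p assume "p \<in> (SIGMA t:{..m}. Tset D (m - t))"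
    then obtain t j where pe: "p = (t, j)" and t: "t \<le> m" and j: "j \<in> Tset D (m - t)" by auto
    have "(\<Sum>i<D. (j(D := t)) i) = (\<Sum>i<D. j i)" by (rule sum.cong) auto
    then have "(\<Sum>i<Suc D. (j(D := t)) i) = (\<Sum>i<D. j i) + t" by simp
    then show "(\<lambda>(t, j). j(D := t)) p \<in> Tset (Suc D) m" using t j pe by (auto simp: Tset_def)
  qed
  show "(\<lambda>j. (j D, j(D := 0))) \<in> Tset (Suc D) m \<rightarrow> (SIGMA t:{..m}. Tset D (m - t))"
  proof (rule Pi_I)
    fix j assume j: "j \<in> Tset (Suc D) m"
    have "(\<Sum>i<D. (j(D := 0)) i) = (\<Sum>i<D. j i)" by (rule sum.cong) auto
    then have s: "(\<Sum>i<Suc D. j i) = (\<Sum>i<D. (j(D := 0)) i) + j D" by simp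
    have "j D \<in> {..m}" using j s by (auto simp: Tset_def)
    moreover have "j(D := 0) \<in> Tset D (m - j D)" using j s by (auto simp: Tset_def)
    ultimately show "(j D, j(D := 0)) \<in> (SIGMA t:{..m}. Tset D (m - t))" by auto
  qed
  fix x assume "x \<in> (SIGMA t:{..m}. Tset D (m - t))"
  then obtain t j where xe: "x = (t, j)" and j: "j \<in> Tset D (m - t)" by auto
  have "j D = 0" using j by (auto simp: Tset_def)
  then show "(\<lambda>j. (j D, j(D := 0))) ((\<lambda>(t, j). j(D := t)) x) = x"
    unfolding xe by (auto simp: fun_eq_iff)
next
  fix j
  show "(\<lambda>(t, j). j(D := t)) ((\<lambda>j. (j D, j(D := 0))) j) = j" by auto
qed

lemma multinomial_T:
  fixes x :: "nat \<Rightarrow> real"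
  shows "(\<Sum>j\<in>Tset D m. fact m / ((\<Prod>i<D. fact (j i)) * fact (m - (\<Sum>i<D. j i)))
           * (\<Prod>i<D. x i ^ j i) * y ^ (m - (\<Sum>i<D. j i))) = ((\<Sum>i<D. x i) + y) ^ m"
proof (induction D arbitrary: m)
  case 0
  have "Tset 0 m = {\<lambda>_. 0}" by (auto simp: Tset_def)
  then show ?case by simp
next
  case (Suc D)
  let ?F = "\<lambda>D m j. fact m / ((\<Prod>i<D. fact (j i)) * fact (m - (\<Sum>i<D. j i))) * (\<Prod>i<D. x i ^ j i) * y ^ (m - (\<Sum>i<D. j i)) :: real"
  have "(\<Sum>j\<in>Tset (Suc D) m. ?F (Suc D) m j) = (\<Sum>p\<in>(SIGMA t:{..m}. Tset D (m - t)). ?F (Suc D) m ((\<lambda>(t, j). j(D := t)) p))"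
    by (rule sum.reindex_bij_betw[OF Tset_Suc_bij, symmetric])
  also have "\<dots> = (\<Sum>(t, j)\<in>(SIGMA t:{..m}. Tset D (m - t)). ?F (Suc D) m (j(D := t)))"
    by (rule sum.cong) (auto split: prod.splits)
  also have "\<dots> = (\<Sum>t\<le>m. \<Sum>j\<in>Tset D (m - t). ?F (Suc D) m (j(D := t)))"
    by (rule sum.Sigma[symmetric]) (auto simp: Tset_finite)
  also have "\<dots> = (\<Sum>t\<le>m. of_nat (m choose t) * x D ^ t * (\<Sum>j\<in>Tset D (m - t). ?F D (m - t) j))"
  proof (rule sum.cong[OF refl])
    fix t assume t: "t \<in> {..m}"
    have "?F (Suc D) m (j(D := t)) = of_nat (m choose t) * x D ^ t * ?F D (m - t) j" if j: "j \<in> Tset D (m - t)" for j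
    proof -
      define s where "s = (\<Sum>i<D. j i)"
      define P where "P = (\<Prod>i<D. fact (j i) :: real)"
      define Q where "Q = (\<Prod>i<D. x i ^ j i)"
      have s0: "(\<Sum>i<D. (j(D := t)) i) = s" unfolding s_def by (rule sum.cong) auto
      have p0: "(\<Prod>i<D. fact ((j(D := t)) i) :: real) = P" unfolding P_def by (rule prod.cong) auto
      have q0: "(\<Prod>i<D. x i ^ (j(D := t)) i) = Q" unfolding Q_def by (rule prod.cong) auto
      have s1: "(\<Sum>i<Suc D. (j(D := t)) i) = s + t" using s0 by simp
      have p1: "(\<Prod>i<Suc D. fact ((j(D := t)) i) :: real) = P * fact t" using p0 by simp
      have q1: "(\<Prod>i<Suc D. x i ^ (j(D := t)) i) = Q * x D ^ t" using q0 by simp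
      have sm: "s \<le> m - t" using j by (simp add: Tset_def s_def)
      have tm: "t \<le> m" using t by simp
      have e: "m - (s + t) = m - t - s" by simp
      have P0: "P \<noteq> 0" by (simp add: P_def)
      have "?F (Suc D) m (j(D := t)) = fact m / (P * fact t * fact (m - t - s)) * (Q * x D ^ t) * y ^ (m - t - s)"
        unfolding s1 p1 q1 e ..
      also have "\<dots> = (fact m / (fact t * fact (m - t))) * x D ^ t * (fact (m - t) / (P * fact (m - t - s)) * Q * y ^ (m - t - s))"
        by (rule alg_helper) (auto simp: P0)
      also have "\<dots> = of_nat (m choose t) * x D ^ t * ?F D (m - t) j"
        by (simp add: binomial_fact[OF tm] s_def[symmetric] P_def[symmetric] Q_def[symmetric])
      finally show ?thesis .
    qed
    then show "(\<Sum>j\<in>Tset D (m - t). ?F (Suc D) m (j(D := t))) = of_nat (m choose t) * x D ^ t * (\<Sum>j\<in>Tset D (m - t). ?F D (m - t) j)"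
      by (simp add: sum_distrib_left)
  qed
  also have "\<dots> = (\<Sum>t\<le>m. of_nat (m choose t) * x D ^ t * ((\<Sum>i<D. x i) + y) ^ (m - t))"
  proof -
    have IHt: "(\<Sum>j\<in>Tset D (m - t). ?F D (m - t) j) = ((\<Sum>i<D. x i) + y) ^ (m - t)" for t
      by (rule Suc.IH)
    show ?thesis by (simp only: IHt)
  qed
  also have "\<dots> = (x D + ((\<Sum>i<D. x i) + y)) ^ m"
    by (simp add: binomial_ring mult_ac)
  also have "\<dots> = ((\<Sum>i<Suc D. x i) + y) ^ m" by (simp add: add_ac)
  finally show ?case .
qed


lemma (in prob_space) indep_vars_group:
  assumes ind: "indep_vars (\<lambda>_. borel) V I" and K: "\<And>i. i \<in> L \<Longrightarrow> K i \<subseteq> I" and dj: "disjoint_family_on K L"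
   and g: "\<And>i. i \<in> L \<Longrightarrow> g i \<in> borel_measurable (PiM (K i) (\<lambda>_. borel))"
  shows "indep_vars (\<lambda>_. borel) (\<lambda>i \<omega>. g i (restrict (\<lambda>s. V s \<omega>) (K i))) L"
  using indep_vars_compose2[OF indep_vars_restrict[OF ind K dj] g] by simp

lemma nat_floor_meas[measurable]: "(\<lambda>x::real. nat \<lfloor>x\<rfloor>) \<in> measurable borel (count_space UNIV)"
proof (subst measurable_count_space_eq2_countable, safe)
  fix k :: nat
  have "(\<lambda>x::real. nat \<lfloor>x\<rfloor>) -` {k} \<inter> space borel = (if k = 0 then {..<1} else {real k..<real k + 1})"
  proof (cases "k = 0")
    case True
    have "nat \<lfloor>x\<rfloor> = 0 \<longleftrightarrow> x < 1" for x :: real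
    proof (cases "x < 1")
      case True then have "\<lfloor>x\<rfloor> \<le> 0" by (simp add: floor_le_zero)
      then show ?thesis using True by simp
    next
      case False then have "1 \<le> \<lfloor>x\<rfloor>" by (simp add: one_le_floor)
      then show ?thesis using False by simp
    qed
    then show ?thesis using True by auto
  next
    case False
    then show ?thesis by (auto simp: nat_eq_iff floor_eq_iff)
  qed
  then show "(\<lambda>x::real. nat \<lfloor>x\<rfloor>) -` {k} \<inter> space borel \<in> sets borel" by simp
qed simp


lemma sum_comp_meas: "(\<lambda>z. \<Sum>j = 1..k. z (SF i j)) \<in> borel_measurable (PiM (SF i ` {1..k}) (\<lambda>_. borel :: real measure))"
  apply (rule borel_measurable_sum)
  apply (rule measurable_component_singleton[where M="\<lambda>_. borel", simplified])
  by auto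

locale prop3 = prob_space M for M :: "'a measure" +
  fixes D :: nat and \<alpha> lam :: "nat \<Rightarrow> real" and Y :: "nat \<Rightarrow> 'a \<Rightarrow> real"
    and N :: "nat \<Rightarrow> 'a \<Rightarrow> nat" and F :: "nat \<Rightarrow> nat \<Rightarrow> 'a \<Rightarrow> real"
  assumes \<alpha>_pos: "\<And>i. i \<le> D \<Longrightarrow> \<alpha> i > 0"
    and lam_nonneg: "\<And>i. i \<le> D \<Longrightarrow> lam i \<ge> 0"
    and lam_sum_pos: "(\<Sum>i\<le>D. lam i) > 0"
    and indep: "indep_vars (\<lambda>_. borel)
        (\<lambda>s \<omega>. case s of SY i \<Rightarrow> Y i \<omega> | SM i \<Rightarrow> real (N i \<omega>) | SF i j \<Rightarrow> F i j \<omega>)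
        (SY ` {..D} \<union> SM ` {..D} \<union> {SF i j | i j. i \<le> D \<and> j \<ge> 1})"
    and Y_distr: "\<And>i. i \<le> D \<Longrightarrow> distr M borel (Y i) = chi2_measure (\<alpha> i)"
    and N_distr: "\<And>i k. i \<le> D \<Longrightarrow>
        measure M {\<omega> \<in> space M. N i \<omega> = k} = (lam i / 2) ^ k / fact k * exp (- lam i / 2)"
    and F_distr: "\<And>i j. i \<le> D \<Longrightarrow> j \<ge> 1 \<Longrightarrow> distr M borel (F i j) = chi2_measure 1"
begin

definition "V = (\<lambda>s \<omega>. case s of SY i \<Rightarrow> Y i \<omega> | SM i \<Rightarrow> real (N i \<omega>) | SF i j \<Rightarrow> F i j \<omega>)"
definition "I = SY ` {..D} \<union> SM ` {..D} \<union> {SF i j | i j. i \<le> D \<and> j \<ge> 1}"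

lemma indV: "indep_vars (\<lambda>_. borel) V I"
  using indep unfolding V_def I_def .

lemma V_simps[simp]: "V (SY i) = Y i" "V (SM i) = (\<lambda>\<omega>. real (N i \<omega>))" "V (SF i j) = F i j"
  by (auto simp: V_def fun_eq_iff)

lemma Vm: "s \<in> I \<Longrightarrow> random_variable borel (V s)"
  using indV by (auto simp: indep_vars_def)

lemma Ym[measurable]: "i \<le> D \<Longrightarrow> random_variable borel (Y i)"
  using Vm[of "SY i"] by (simp add: I_def)

lemma Fm[measurable]: "i \<le> D \<Longrightarrow> 1 \<le> j \<Longrightarrow> random_variable borel (F i j)"
  using Vm[of "SF i j"] by (simp add: I_def)

lemma Nrm[measurable]: "i \<le> D \<Longrightarrow> random_variable borel (\<lambda>\<omega>. real (N i \<omega>))"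
  using Vm[of "SM i"] by (simp add: I_def)

lemma Nm[measurable]: "i \<le> D \<Longrightarrow> N i \<in> measurable M (count_space UNIV)"
proof -
  assume i: "i \<le> D"
  have "(\<lambda>\<omega>. nat \<lfloor>real (N i \<omega>)\<rfloor>) \<in> measurable M (count_space UNIV)" using i by measurable
  then show ?thesis by simp
qed

lemma indY: "indep_vars (\<lambda>_. borel) Y {..D}"
proof -
  have "indep_vars (\<lambda>_. borel) (\<lambda>i \<omega>. (\<lambda>z. z (SY i)) (restrict (\<lambda>s. V s \<omega>) {SY i})) {..D}"
    by (rule indep_vars_group[OF indV]) (auto simp: I_def disjoint_family_on_def)
  then show ?thesis by (rule indep_vars_cong[THEN iffD1, rotated -1]) auto
qed

definition "Hn n i \<omega> = (\<Sum>j=1..n i. F i j \<omega>)"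

lemma Hm[measurable]: "i \<le> D \<Longrightarrow> random_variable borel (Hn n i)"
  unfolding Hn_def by measurable

lemma indH: "indep_vars (\<lambda>_. borel) (Hn n) {..D}"
proof -
  have g: "\<And>i. i \<in> {..D} \<Longrightarrow> (\<lambda>z::src\<Rightarrow>real. \<Sum>j=1..n i. z (SF i j)) \<in> borel_measurable (PiM (SF i ` {1..n i}) (\<lambda>_. borel))"
    by (rule sum_comp_meas)
  have "indep_vars (\<lambda>_. borel) (\<lambda>i \<omega>. (\<lambda>z. \<Sum>j=1..n i. z (SF i j)) (restrict (\<lambda>s. V s \<omega>) (SF i ` {1..n i}))) {..D}"
    by (rule indep_vars_group[OF indV _ _ g]) (auto simp: disjoint_family_on_def I_def)
  moreover have "(\<lambda>\<omega>. (\<lambda>z. \<Sum>j=1..n i. z (SF i j)) (restrict (\<lambda>s. V s \<omega>) (SF i ` {1..n i}))) = Hn n i" for i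
    by (auto simp: Hn_def fun_eq_iff intro!: sum.cong)
  ultimately show ?thesis by simp
qed

lemma H_distr: "i \<le> D \<Longrightarrow> distr M borel (Hn n i) = chi2_measure (real (n i))"
proof -
  assume i: "i \<le> D"
  have ind: "indep_vars (\<lambda>_. borel) V (SF i ` {1..n i})" using indV by (rule indep_vars_subset) (use i in \<open>auto simp: I_def\<close>)
  have "distr M borel (\<lambda>\<omega>. \<Sum>s\<in>SF i ` {1..n i}. V s \<omega>) = chi2_measure (\<Sum>s\<in>SF i ` {1..n i}. 1)"
    by (rule chi2_sum[OF _ ind]) (use i F_distr in auto)
  moreover have "(\<lambda>\<omega>. \<Sum>s\<in>SF i ` {1..n i}. V s \<omega>) = Hn n i"
    by (auto simp: Hn_def fun_eq_iff sum.reindex inj_on_def)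
  moreover have "(\<Sum>s\<in>SF i ` {1..n i}. 1::real) = real (n i)"
    by (simp add: card_image inj_on_def)
  ultimately show ?thesis by simp
qed

end


lemma C1_alg:
  fixes y p a b :: real
  assumes "0 < y" "0 \<le> p" "p = 0 \<Longrightarrow> b = 0" and c: "c \<longleftrightarrow> p = 0"
  shows "(a + b) / (y + p) = y / (y + p) * (a / y) + (1 - y / (y + p)) * (if c then 0 else b / p)"
proof (cases "p = 0")
  case True then show ?thesis using assms by simp
next
  case False
  then have p: "0 < p" using assms by simp
  have yp: "y + p \<noteq> 0" using assms p by simp
  have e0: "1 - y / (y + p) = p / (y + p)" using yp by (simp add: field_simps)
  have e1: "y / (y + p) * (a / y) = a / (y + p)" by (rule cancel_helper) (use assms in simp)
  have e2: "p / (y + p) * (b / p) = b / (y + p)" by (rule cancel_helper) (use p in simp)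
  show ?thesis using c False assms(1) by (simp add: e0 e1 e2 add_divide_distrib)
qed

context prop3 begin

lemma X_law: "distr M (PiM {..<D} (\<lambda>_. borel)) (\<lambda>\<omega>. \<lambda>i\<in>{..<D}. Y i \<omega> / (\<Sum>k\<le>D. Y k \<omega>)) = dirichlet_measure D \<alpha>"
  by (rule dirichlet_law[OF indY Y_distr])

lemma AE_Ypos: "AE \<omega> in M. \<forall>i\<in>{..D}. 0 < Y i \<omega>"
proof (rule AE_finite_allI)
  fix i assume "i \<in> {..D}" then have i: "i \<le> D" by simp
  have "AE x in distr M borel (Y i). 0 < x" unfolding Y_distr[OF i] by (rule AE_chi2_pos[OF \<alpha>_pos[OF i]])
  from AE_distrD[OF Ym[OF i] this] show "AE \<omega> in M. 0 < Y i \<omega>" .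
qed simp

lemma AE_Fpos: "AE \<omega> in M. \<forall>i\<in>{..D}. \<forall>j. 1 \<le> j \<longrightarrow> 0 < F i j \<omega>"
proof (rule AE_finite_allI)
  fix i assume "i \<in> {..D}" then have i: "i \<le> D" by simp
  have "AE \<omega> in M. 1 \<le> j \<longrightarrow> 0 < F i j \<omega>" for j
  proof (cases "1 \<le> j")
    case True
    have "AE x in distr M borel (F i j). 0 < x" unfolding F_distr[OF i True] by (rule AE_chi2_pos) simp
    from AE_distrD[OF Fm[OF i True] this] show ?thesis by (rule eventually_mono) simp
  qed simp
  then show "AE \<omega> in M. \<forall>j. 1 \<le> j \<longrightarrow> 0 < F i j \<omega>" by (simp add: AE_all_countable)
qed simp

lemma C1: "AE \<omega> in M. \<forall>i<D.
   (Y i \<omega> + (\<Sum>j=1..N i \<omega>. F i j \<omega>)) / (\<Sum>k\<le>D. Y k \<omega> + (\<Sum>j=1..N k \<omega>. F k j \<omega>))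
   = (\<Sum>i\<le>D. Y i \<omega>) / ((\<Sum>i\<le>D. Y i \<omega>) + (\<Sum>i\<le>D. \<Sum>j=1..N i \<omega>. F i j \<omega>)) * (Y i \<omega> / (\<Sum>k\<le>D. Y k \<omega>))
     + (1 - (\<Sum>i\<le>D. Y i \<omega>) / ((\<Sum>i\<le>D. Y i \<omega>) + (\<Sum>i\<le>D. \<Sum>j=1..N i \<omega>. F i j \<omega>)))
       * (if (\<Sum>k\<le>D. N k \<omega>) = 0 then 0 else (\<Sum>j=1..N i \<omega>. F i j \<omega>) / (\<Sum>k\<le>D. \<Sum>j=1..N k \<omega>. F k j \<omega>))"
  using AE_Ypos AE_Fpos
proof eventually_elim
  case (elim \<omega>)
  define y where "y = (\<Sum>i\<le>D. Y i \<omega>)"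
  define Pk where "Pk k = (\<Sum>j=1..N k \<omega>. F k j \<omega>)" for k
  define p where "p = (\<Sum>k\<le>D. Pk k)"
  have y: "0 < y" unfolding y_def using elim(1) by (intro sum_pos) auto
  have Pk0: "0 \<le> Pk k" if "k \<le> D" for k unfolding Pk_def using elim(2) that by (intro sum_nonneg) (auto intro: less_imp_le)
  have p0: "0 \<le> p" unfolding p_def using Pk0 by (intro sum_nonneg) auto
  have pz: "p = 0 \<longleftrightarrow> (\<Sum>k\<le>D. N k \<omega>) = 0"
  proof
    assume "p = 0"
    then have all0: "\<forall>k\<in>{..D}. Pk k = 0" unfolding p_def using Pk0 by (subst sum_nonneg_eq_0_iff[symmetric]) auto
    have "N k \<omega> = 0" if "k \<le> D" for k
    proof (rule ccontr)
      assume "N k \<omega> \<noteq> 0"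
      then have "0 < Pk k" unfolding Pk_def using elim(2) that by (intro sum_pos) auto
      then show False using all0 that by auto
    qed
    then show "(\<Sum>k\<le>D. N k \<omega>) = 0" by simp
  next
    assume "(\<Sum>k\<le>D. N k \<omega>) = 0"
    then show "p = 0" by (simp add: p_def Pk_def)
  qed
  have tot: "(\<Sum>k\<le>D. Y k \<omega> + (\<Sum>j=1..N k \<omega>. F k j \<omega>)) = y + p"
    by (simp add: y_def p_def Pk_def sum.distrib)
  show ?case
  proof (intro allI impI)
    fix i assume i: "i < D"
    have bz: "p = 0 \<Longrightarrow> Pk i = 0" using pz i by (simp add: Pk_def)
    show "(Y i \<omega> + (\<Sum>j=1..N i \<omega>. F i j \<omega>)) / (\<Sum>k\<le>D. Y k \<omega> + (\<Sum>j=1..N k \<omega>. F k j \<omega>))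
   = (\<Sum>i\<le>D. Y i \<omega>) / ((\<Sum>i\<le>D. Y i \<omega>) + (\<Sum>i\<le>D. \<Sum>j=1..N i \<omega>. F i j \<omega>)) * (Y i \<omega> / (\<Sum>k\<le>D. Y k \<omega>))
     + (1 - (\<Sum>i\<le>D. Y i \<omega>) / ((\<Sum>i\<le>D. Y i \<omega>) + (\<Sum>i\<le>D. \<Sum>j=1..N i \<omega>. F i j \<omega>)))
       * (if (\<Sum>k\<le>D. N k \<omega>) = 0 then 0 else (\<Sum>j=1..N i \<omega>. F i j \<omega>) / (\<Sum>k\<le>D. \<Sum>j=1..N k \<omega>. F k j \<omega>))"
      unfolding tot using C1_alg[OF y p0 bz pz[symmetric], of "Y i \<omega>"]
      by (simp add: y_def p_def Pk_def)
  qed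
qed

end


lemma comp_meas_src: "s \<in> J \<Longrightarrow> (\<lambda>z::src\<Rightarrow>real. z s) \<in> borel_measurable (PiM J (\<lambda>_. borel))"
  using measurable_component_singleton[of s J "\<lambda>_. borel"] by simp

lemma sumF_meas: "(\<And>j. j \<in> {1..k} \<Longrightarrow> SF i j \<in> J) \<Longrightarrow> (\<lambda>z::src\<Rightarrow>real. \<Sum>j=1..k. z (SF i j)) \<in> borel_measurable (PiM J (\<lambda>_. borel))"
  by (rule borel_measurable_sum) (rule comp_meas_src, auto)

context prop3 begin

definition "Jn n = {SF i j | i j. i \<le> D \<and> 1 \<le> j \<and> j \<le> n i}"

lemma Jn_sub: "Jn n \<subseteq> I" by (auto simp: Jn_def I_def)

lemma sumY_law: "distr M borel (\<lambda>\<omega>. \<Sum>i\<le>D. Y i \<omega>) = chi2_measure (\<Sum>i\<le>D. \<alpha> i)"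
  by (rule chi2_sum[OF _ indY Y_distr]) (auto intro: less_imp_le \<alpha>_pos)

lemma sumH_law: "distr M borel (\<lambda>\<omega>. \<Sum>i\<le>D. Hn n i \<omega>) = chi2_measure (real (\<Sum>i\<le>D. n i))"
  using chi2_sum[OF _ indH H_distr] by simp

lemma YH_indep: "indep2 borel (\<lambda>\<omega>. \<Sum>i\<le>D. Y i \<omega>) borel (\<lambda>\<omega>. \<Sum>i\<le>D. Hn n i \<omega>)"
proof -
  have split: "indep2 (PiM (SY ` {..D}) (\<lambda>_. borel)) (\<lambda>\<omega>. restrict (\<lambda>s. V s \<omega>) (SY ` {..D}))
      (PiM (Jn n) (\<lambda>_. borel)) (\<lambda>\<omega>. restrict (\<lambda>s. V s \<omega>) (Jn n))"
    by (rule indep_var_imp_indep2, rule indep_var_restrict[OF indV]) (auto simp: Jn_def I_def)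
  have f: "(\<lambda>z::src\<Rightarrow>real. \<Sum>i\<le>D. z (SY i)) \<in> borel_measurable (PiM (SY ` {..D}) (\<lambda>_. borel))"
    by (rule borel_measurable_sum) (rule comp_meas_src, auto)
  have g: "(\<lambda>z::src\<Rightarrow>real. \<Sum>i\<le>D. \<Sum>j=1..n i. z (SF i j)) \<in> borel_measurable (PiM (Jn n) (\<lambda>_. borel))"
    by (rule borel_measurable_sum) (rule sumF_meas, auto simp: Jn_def)
  have "indep2 borel (\<lambda>\<omega>. (\<lambda>z::src\<Rightarrow>real. \<Sum>i\<le>D. z (SY i)) (restrict (\<lambda>s. V s \<omega>) (SY ` {..D})))
      borel (\<lambda>\<omega>. (\<lambda>z::src\<Rightarrow>real. \<Sum>i\<le>D. \<Sum>j=1..n i. z (SF i j)) (restrict (\<lambda>s. V s \<omega>) (Jn n)))"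
    by (rule indep2_compose[OF split f g])
  moreover have "(\<lambda>\<omega>. (\<lambda>z::src\<Rightarrow>real. \<Sum>i\<le>D. z (SY i)) (restrict (\<lambda>s. V s \<omega>) (SY ` {..D}))) = (\<lambda>\<omega>. \<Sum>i\<le>D. Y i \<omega>)"
    by (auto simp: fun_eq_iff intro!: sum.cong)
  moreover have "(\<lambda>\<omega>. (\<lambda>z::src\<Rightarrow>real. \<Sum>i\<le>D. \<Sum>j=1..n i. z (SF i j)) (restrict (\<lambda>s. V s \<omega>) (Jn n))) = (\<lambda>\<omega>. \<Sum>i\<le>D. Hn n i \<omega>)"
    by (auto simp: fun_eq_iff Hn_def Jn_def intro!: sum.cong)
  ultimately show ?thesis by simp
qed

end


context prop3 begin

lemma Jn_mem[simp]: "SF i j \<in> Jn n \<longleftrightarrow> i \<le> D \<and> 1 \<le> j \<and> j \<le> n i"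
  by (auto simp: Jn_def)

definition "Wn n \<omega> = (\<Sum>i\<le>D. Y i \<omega>) / ((\<Sum>i\<le>D. Y i \<omega>) + (\<Sum>i\<le>D. Hn n i \<omega>))"
definition "Xpn n \<omega> = (\<lambda>i\<in>{..<D}. if (\<Sum>k\<le>D. n k) = 0 then 0 else Hn n i \<omega> / (\<Sum>k\<le>D. Hn n k \<omega>))"

lemma Wn_meas[measurable]: "random_variable borel (Wn n)"
  unfolding Wn_def by measurable

lemma Xpn_eq: "Xpn n \<omega> = (\<lambda>i\<in>{..<D}. Hn n i \<omega> / (\<Sum>k\<le>D. Hn n k \<omega>))"
proof (cases "(\<Sum>k\<le>D. n k) = 0")
  case True
  then have "n i = 0" if "i \<le> D" for i using that by simp
  then have "Hn n i \<omega> = 0" if "i \<le> D" for i using that by (simp add: Hn_def)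
  then show ?thesis using True by (auto simp: Xpn_def intro!: restrict_ext)
qed (simp add: Xpn_def del: sum_eq_0_iff)

lemma Xpn_meas[measurable]: "random_variable (PiM {..<D} (\<lambda>_. borel)) (Xpn n)"
  unfolding Xpn_eq[abs_def] by measurable

lemma Wn_law: "distr M borel (Wn n) = beta_measure (\<Sum>i\<le>D. \<alpha> i) (real (\<Sum>i\<le>D. n i))"
proof -
  have a: "0 < (\<Sum>i\<le>D. \<alpha> i)" by (rule sum_pos) (auto intro: \<alpha>_pos)
  have b: "0 \<le> real (\<Sum>i\<le>D. n i)" by (rule of_nat_0_le_iff)
  from gamma_beta[OF YH_indep sumY_law sumH_law less_imp_le[OF a] b] a
  show ?thesis unfolding Wn_def[abs_def] by blast
qed

lemma Xpn_law: "distr M (PiM {..<D} (\<lambda>_. borel)) (Xpn n) = dirichlet_measure D (\<lambda>i. real (n i))"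
  unfolding Xpn_eq[abs_def] by (rule dirichlet_law[OF indH H_distr])

lemma Wn_Xpn_indep: "indep2 borel (Wn n) (PiM {..<D} (\<lambda>_. borel)) (Xpn n)"
proof -
  let ?R = "\<lambda>\<omega>. \<lambda>i\<in>{..<D}. Hn n i \<omega> / (\<Sum>k\<le>D. Hn n k \<omega>)"
  let ?H = "\<lambda>\<omega>. \<Sum>k\<le>D. Hn n k \<omega>"
  let ?Y = "\<lambda>\<omega>. \<Sum>i\<le>D. Y i \<omega>"
  have core: "indep2 borel ?H (PiM {..<D} (\<lambda>_. borel)) ?R"
  proof -
    have nn: "\<And>i. i \<le> D \<Longrightarrow> 0 \<le> real (n i)" by simp
    show ?thesis by (rule dirichlet_core[OF indH H_distr nn])
  qed
  have split: "indep2 (PiM (Jn n) (\<lambda>_. borel)) (\<lambda>\<omega>. restrict (\<lambda>s. V s \<omega>) (Jn n))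
      (PiM (SY ` {..D}) (\<lambda>_. borel)) (\<lambda>\<omega>. restrict (\<lambda>s. V s \<omega>) (SY ` {..D}))"
    by (rule indep_var_imp_indep2, rule indep_var_restrict[OF indV]) (auto simp: Jn_def I_def)
  have [measurable]: "i \<le> D \<Longrightarrow> (\<lambda>z::src\<Rightarrow>real. \<Sum>j=1..n i. z (SF i j)) \<in> borel_measurable (PiM (Jn n) (\<lambda>_. borel))" for i
    by (rule sumF_meas) (auto simp: Jn_def)
  have f: "(\<lambda>z::src\<Rightarrow>real. (\<lambda>i\<in>{..<D}. (\<Sum>j=1..n i. z (SF i j)) / (\<Sum>k\<le>D. \<Sum>j=1..n k. z (SF k j)), \<Sum>k\<le>D. \<Sum>j=1..n k. z (SF k j)))
      \<in> measurable (PiM (Jn n) (\<lambda>_. borel)) (PiM {..<D} (\<lambda>_. borel) \<Otimes>\<^sub>M borel)"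
    by measurable
  have g: "(\<lambda>z::src\<Rightarrow>real. \<Sum>i\<le>D. z (SY i)) \<in> borel_measurable (PiM (SY ` {..D}) (\<lambda>_. borel))"
    by (rule borel_measurable_sum) (rule comp_meas_src, auto)
  have P1: "indep2 (PiM {..<D} (\<lambda>_. borel) \<Otimes>\<^sub>M borel) (\<lambda>\<omega>. (?R \<omega>, ?H \<omega>)) borel ?Y"
  proof -
    have "indep2 (PiM {..<D} (\<lambda>_. borel) \<Otimes>\<^sub>M borel)
      (\<lambda>\<omega>. (\<lambda>z::src\<Rightarrow>real. (\<lambda>i\<in>{..<D}. (\<Sum>j=1..n i. z (SF i j)) / (\<Sum>k\<le>D. \<Sum>j=1..n k. z (SF k j)), \<Sum>k\<le>D. \<Sum>j=1..n k. z (SF k j))) (restrict (\<lambda>s. V s \<omega>) (Jn n)))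
      borel (\<lambda>\<omega>. (\<lambda>z::src\<Rightarrow>real. \<Sum>i\<le>D. z (SY i)) (restrict (\<lambda>s. V s \<omega>) (SY ` {..D})))"
      by (rule indep2_compose[OF split f g])
    then show ?thesis
    proof (rule indep2_AE_cong)
      have e: "(\<Sum>j=1..n i. restrict (\<lambda>s. V s \<omega>) (Jn n) (SF i j)) = Hn n i \<omega>" if "i \<le> D" for i \<omega>
        using that by (auto simp: Hn_def Jn_def intro!: sum.cong)
      have e2: "(\<Sum>k\<le>D. \<Sum>j=1..n k. restrict (\<lambda>s. V s \<omega>) (Jn n) (SF k j)) = (\<Sum>k\<le>D. Hn n k \<omega>)" for \<omega>
        by (rule sum.cong[OF refl]) (rule e, simp)
      show "AE \<omega> in M. (\<lambda>z::src\<Rightarrow>real. (\<lambda>i\<in>{..<D}. (\<Sum>j=1..n i. z (SF i j)) / (\<Sum>k\<le>D. \<Sum>j=1..n k. z (SF k j)), \<Sum>k\<le>D. \<Sum>j=1..n k. z (SF k j))) (restrict (\<lambda>s. V s \<omega>) (Jn n)) = (?R \<omega>, ?H \<omega>)"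
        by (rule AE_I2) (auto simp: e2 e Hn_def intro!: restrict_ext)
      show "AE \<omega> in M. (\<lambda>z::src\<Rightarrow>real. \<Sum>i\<le>D. z (SY i)) (restrict (\<lambda>s. V s \<omega>) (SY ` {..D})) = ?Y \<omega>"
        by (rule AE_I2) (auto intro!: sum.cong)
    qed measurable
  qed
  have P2: "indep2 (PiM {..<D} (\<lambda>_. borel)) ?R (borel \<Otimes>\<^sub>M borel) (\<lambda>\<omega>. (?H \<omega>, ?Y \<omega>))"
    by (rule indep2_triA[OF indep2_symm[OF core] P1])
  have "indep2 (PiM {..<D} (\<lambda>_. borel)) (\<lambda>\<omega>. id (?R \<omega>)) borel (\<lambda>\<omega>. (\<lambda>p. snd p / (snd p + fst p)) (?H \<omega>, ?Y \<omega>))"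
    by (rule indep2_compose[OF P2]) measurable
  then have "indep2 (PiM {..<D} (\<lambda>_. borel)) (Xpn n) borel (Wn n)"
    by (simp add: Xpn_eq[abs_def] Wn_def[abs_def])
  then show ?thesis by (rule indep2_symm)
qed

end


context prop3 begin

lemma indN: "indep_vars (\<lambda>_. borel) (\<lambda>k \<omega>. real (N k \<omega>)) {..D}"
proof -
  have "indep_vars (\<lambda>_. borel) (\<lambda>i \<omega>. (\<lambda>z. z (SM i)) (restrict (\<lambda>s. V s \<omega>) {SM i})) {..D}"
    by (rule indep_vars_group[OF indV]) (auto simp: I_def disjoint_family_on_def)
  then show ?thesis by (rule indep_vars_cong[THEN iffD1, rotated -1]) auto
qed

lemma N_joint: "prob {\<omega>\<in>space M. \<forall>k\<le>D. N k \<omega> = n k} = (\<Prod>k\<le>D. (lam k / 2) ^ n k / fact (n k) * exp (- lam k / 2))"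
proof -
  have "prob (\<Inter>k\<in>{..D}. (\<lambda>\<omega>. real (N k \<omega>)) -` {real (n k)} \<inter> space M) = (\<Prod>k\<in>{..D}. prob ((\<lambda>\<omega>. real (N k \<omega>)) -` {real (n k)} \<inter> space M))"
    by (rule indep_varsD_finite[OF indN]) auto
  moreover have "(\<Inter>k\<in>{..D}. (\<lambda>\<omega>. real (N k \<omega>)) -` {real (n k)} \<inter> space M) = {\<omega>\<in>space M. \<forall>k\<le>D. N k \<omega> = n k}"
    by auto
  moreover have "prob ((\<lambda>\<omega>. real (N k \<omega>)) -` {real (n k)} \<inter> space M) = (lam k / 2) ^ n k / fact (n k) * exp (- lam k / 2)" if "k \<le> D" for k
  proof -
    have "(\<lambda>\<omega>. real (N k \<omega>)) -` {real (n k)} \<inter> space M = {\<omega> \<in> space M. N k \<omega> = n k}" by auto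
    then show ?thesis using N_distr[OF that] by simp
  qed
  ultimately show ?thesis by simp
qed

definition "Wf \<omega> = (\<Sum>i\<le>D. Y i \<omega>) / ((\<Sum>i\<le>D. Y i \<omega>) + (\<Sum>i\<le>D. \<Sum>j=1..N i \<omega>. F i j \<omega>))"
definition "Xf \<omega> = (\<lambda>i\<in>{..<D}. if (\<Sum>k\<le>D. N k \<omega>) = 0 then 0
        else (\<Sum>j=1..N i \<omega>. F i j \<omega>) / (\<Sum>k\<le>D. \<Sum>j=1..N k \<omega>. F k j \<omega>))"

definition "An n = SY ` {..D} \<union> Jn n"

definition "Phi n (z::src\<Rightarrow>real) = ((\<Sum>i\<le>D. z (SY i)) / ((\<Sum>i\<le>D. z (SY i)) + (\<Sum>i\<le>D. \<Sum>j=1..n i. z (SF i j))),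
   (\<lambda>i\<in>{..<D}. if (\<Sum>k\<le>D. n k) = 0 then 0 else (\<Sum>j=1..n i. z (SF i j)) / (\<Sum>k\<le>D. \<Sum>j=1..n k. z (SF k j))))"

lemma Phi_meas: "Phi n \<in> measurable (PiM (An n) (\<lambda>_. borel)) (borel \<Otimes>\<^sub>M PiM {..<D} (\<lambda>_. borel))"
proof -
  have [measurable]: "i \<le> D \<Longrightarrow> (\<lambda>z::src\<Rightarrow>real. \<Sum>j=1..n i. z (SF i j)) \<in> borel_measurable (PiM (An n) (\<lambda>_. borel))" for i
    by (rule sumF_meas) (auto simp: An_def)
  have [measurable]: "i \<le> D \<Longrightarrow> (\<lambda>z::src\<Rightarrow>real. z (SY i)) \<in> borel_measurable (PiM (An n) (\<lambda>_. borel))" for i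
    by (rule comp_meas_src) (auto simp: An_def)
  show ?thesis unfolding Phi_def[abs_def] by measurable
qed

lemma Phi_eq: "Phi n (restrict (\<lambda>s. V s \<omega>) (An n)) = (Wn n \<omega>, Xpn n \<omega>)"
proof -
  have e: "(\<Sum>j=1..n i. restrict (\<lambda>s. V s \<omega>) (An n) (SF i j)) = Hn n i \<omega>" if "i \<le> D" for i
    using that by (auto simp: Hn_def An_def intro!: sum.cong)
  have e2: "(\<Sum>k\<le>D. \<Sum>j=1..n k. restrict (\<lambda>s. V s \<omega>) (An n) (SF k j)) = (\<Sum>k\<le>D. Hn n k \<omega>)"
    by (rule sum.cong[OF refl]) (rule e, simp)
  have e3: "(\<Sum>i\<le>D. restrict (\<lambda>s. V s \<omega>) (An n) (SY i)) = (\<Sum>i\<le>D. Y i \<omega>)"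
    by (rule sum.cong) (auto simp: An_def)
  have comp: "(\<lambda>i\<in>{..<D}. if (\<Sum>k\<le>D. n k) = 0 then 0 else (\<Sum>j=1..n i. restrict (\<lambda>s. V s \<omega>) (An n) (SF i j)) / (\<Sum>k\<le>D. Hn n k \<omega>))
     = (\<lambda>i\<in>{..<D}. if (\<Sum>k\<le>D. n k) = 0 then 0 else Hn n i \<omega> / (\<Sum>k\<le>D. Hn n k \<omega>))"
  proof (rule restrict_ext)
    fix i assume "i \<in> {..<D}" then have "i \<le> D" by simp
    show "(if (\<Sum>k\<le>D. n k) = 0 then 0 else (\<Sum>j=1..n i. restrict (\<lambda>s. V s \<omega>) (An n) (SF i j)) / (\<Sum>k\<le>D. Hn n k \<omega>))
       = (if (\<Sum>k\<le>D. n k) = 0 then 0 else Hn n i \<omega> / (\<Sum>k\<le>D. Hn n k \<omega>))"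
      by (simp only: e[OF \<open>i \<le> D\<close>])
  qed
  show ?thesis
    unfolding Phi_def Wn_def Xpn_def e2 e3 comp ..
qed

lemma COND:
  assumes C: "C \<in> sets (borel \<Otimes>\<^sub>M PiM {..<D} (\<lambda>_. borel))"
  shows "prob {\<omega>\<in>space M. (Wf \<omega>, Xf \<omega>) \<in> C \<and> (\<forall>k\<le>D. N k \<omega> = n k)}
     = prob {\<omega>\<in>space M. (Wn n \<omega>, Xpn n \<omega>) \<in> C} * prob {\<omega>\<in>space M. \<forall>k\<le>D. N k \<omega> = n k}"
proof -
  let ?ZA = "\<lambda>\<omega>. restrict (\<lambda>s. V s \<omega>) (An n)"
  let ?ZB = "\<lambda>\<omega>. restrict (\<lambda>s. V s \<omega>) (SM ` {..D})"
  have split: "indep2 (PiM (An n) (\<lambda>_. borel)) ?ZA (PiM (SM ` {..D}) (\<lambda>_. borel)) ?ZB"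
    by (rule indep_var_imp_indep2, rule indep_var_restrict[OF indV]) (auto simp: An_def Jn_def I_def)
  have ZAm: "random_variable (PiM (An n) (\<lambda>_. borel)) ?ZA" and ZBm: "random_variable (PiM (SM ` {..D}) (\<lambda>_. borel)) ?ZB"
    using indep2_rv[OF split] by auto
  define S1 where "S1 = Phi n -` C \<inter> space (PiM (An n) (\<lambda>_. borel))"
  define S2 where "S2 = {z \<in> space (PiM (SM ` {..D}) (\<lambda>_. borel)). \<forall>k\<le>D. z (SM k) = real (n k)}"
  have S1: "S1 \<in> sets (PiM (An n) (\<lambda>_. borel))" unfolding S1_def using Phi_meas C by (rule measurable_sets)
  have [measurable]: "k \<le> D \<Longrightarrow> (\<lambda>z::src\<Rightarrow>real. z (SM k)) \<in> borel_measurable (PiM (SM ` {..D}) (\<lambda>_. borel))" for k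
    by (rule comp_meas_src) auto
  have S2: "S2 \<in> sets (PiM (SM ` {..D}) (\<lambda>_. borel))" unfolding S2_def by measurable
  have sp: "?ZA \<omega> \<in> space (PiM (An n) (\<lambda>_. borel))" "?ZB \<omega> \<in> space (PiM (SM ` {..D}) (\<lambda>_. borel))" if "\<omega> \<in> space M" for \<omega>
    using measurable_space[OF ZAm that] measurable_space[OF ZBm that] by auto
  have ZB_iff: "?ZB \<omega> \<in> S2 \<longleftrightarrow> (\<forall>k\<le>D. N k \<omega> = n k)" if "\<omega> \<in> space M" for \<omega>
    using sp(2)[OF that] by (auto simp: S2_def)
  have ZA_iff: "?ZA \<omega> \<in> S1 \<longleftrightarrow> (Wn n \<omega>, Xpn n \<omega>) \<in> C" if "\<omega> \<in> space M" for \<omega>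
    using sp(1)[OF that] by (auto simp: S1_def Phi_eq)
  have WX: "Wf \<omega> = Wn n \<omega> \<and> Xf \<omega> = Xpn n \<omega>" if "\<forall>k\<le>D. N k \<omega> = n k" for \<omega>
  proof -
    have e: "(\<Sum>j=1..N i \<omega>. F i j \<omega>) = Hn n i \<omega>" if "i \<le> D" for i
      using \<open>\<forall>k\<le>D. N k \<omega> = n k\<close> that by (simp add: Hn_def)
    have s1: "(\<Sum>i\<le>D. \<Sum>j=1..N i \<omega>. F i j \<omega>) = (\<Sum>i\<le>D. Hn n i \<omega>)" by (rule sum.cong[OF refl]) (rule e, simp)
    have s2: "(\<Sum>k\<le>D. N k \<omega>) = (\<Sum>k\<le>D. n k)" using that by (intro sum.cong) auto
    have comp: "(\<lambda>i\<in>{..<D}. if (\<Sum>k\<le>D. n k) = 0 then 0 else (\<Sum>j=1..N i \<omega>. F i j \<omega>) / (\<Sum>k\<le>D. Hn n k \<omega>))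
       = (\<lambda>i\<in>{..<D}. if (\<Sum>k\<le>D. n k) = 0 then 0 else Hn n i \<omega> / (\<Sum>k\<le>D. Hn n k \<omega>))"
    proof (rule restrict_ext)
      fix i assume "i \<in> {..<D}" then have "i \<le> D" by simp
      show "(if (\<Sum>k\<le>D. n k) = 0 then 0 else (\<Sum>j=1..N i \<omega>. F i j \<omega>) / (\<Sum>k\<le>D. Hn n k \<omega>))
         = (if (\<Sum>k\<le>D. n k) = 0 then 0 else Hn n i \<omega> / (\<Sum>k\<le>D. Hn n k \<omega>))"
        by (simp only: e[OF \<open>i \<le> D\<close>])
    qed
    show ?thesis unfolding Wf_def Wn_def Xf_def Xpn_def s1 s2 comp by simp
  qed
  have "{\<omega>\<in>space M. (Wf \<omega>, Xf \<omega>) \<in> C \<and> (\<forall>k\<le>D. N k \<omega> = n k)} = {\<omega>\<in>space M. ?ZA \<omega> \<in> S1 \<and> ?ZB \<omega> \<in> S2}"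
    using ZA_iff ZB_iff WX by auto
  moreover have "{\<omega>\<in>space M. ?ZA \<omega> \<in> S1} = {\<omega>\<in>space M. (Wn n \<omega>, Xpn n \<omega>) \<in> C}" using ZA_iff by auto
  moreover have "{\<omega>\<in>space M. ?ZB \<omega> \<in> S2} = {\<omega>\<in>space M. \<forall>k\<le>D. N k \<omega> = n k}" using ZB_iff by auto
  ultimately show ?thesis using indep2D[OF split S1 S2] by simp
qed

end


context prop3 begin

definition "Bs = SM ` {..D} \<union> {SF i j | i j. i \<le> D \<and> 1 \<le> j}"

lemma Bs_mem[simp]: "SF i j \<in> Bs \<longleftrightarrow> i \<le> D \<and> 1 \<le> j" "SM i \<in> Bs \<longleftrightarrow> i \<le> D" "SY i \<notin> Bs"
  by (auto simp: Bs_def)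

definition "Nf (g::src\<Rightarrow>real) i = nat \<lfloor>g (SM i)\<rfloor>"
definition "Pf g i = (\<Sum>j=1..Nf g i. g (SF i j))"

definition "Phi2 p = (fst p / (fst p + (\<Sum>i\<le>D. Pf (snd p) i)),
   (\<lambda>i\<in>{..<D}. if (\<forall>k\<le>D. Nf (snd p) k = 0) then 0 else Pf (snd p) i / (\<Sum>k\<le>D. Pf (snd p) k)))"

lemma Nf_meas[measurable]: "i \<le> D \<Longrightarrow> (\<lambda>g. Nf g i) \<in> measurable (PiM Bs (\<lambda>_. borel)) (count_space UNIV)"
proof -
  assume i: "i \<le> D"
  have [measurable]: "(\<lambda>z::src\<Rightarrow>real. z (SM i)) \<in> borel_measurable (PiM Bs (\<lambda>_. borel))"
    by (rule comp_meas_src) (use i in simp)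
  show ?thesis unfolding Nf_def by measurable
qed

lemma Pf_meas[measurable]: "i \<le> D \<Longrightarrow> (\<lambda>g. Pf g i) \<in> borel_measurable (PiM Bs (\<lambda>_. borel))"
proof -
  assume i: "i \<le> D"
  have f: "(\<lambda>g. \<Sum>j=1..k. (g::src\<Rightarrow>real) (SF i j)) \<in> borel_measurable (PiM Bs (\<lambda>_. borel))" for k
    by (rule sumF_meas) (use i in simp)
  have "(\<lambda>g. \<Sum>j=1..Nf g i. (g::src\<Rightarrow>real) (SF i j)) \<in> borel_measurable (PiM Bs (\<lambda>_. borel))"
    by (rule measurable_compose_countable'[where f="\<lambda>k g. \<Sum>j=1..k. (g::src\<Rightarrow>real) (SF i j)" and g="\<lambda>g. Nf g i" and I=UNIV, OF f Nf_meas[OF i]]) simp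
  then show ?thesis by (simp add: Pf_def)
qed

lemma Phi2_meas: "Phi2 \<in> measurable (borel \<Otimes>\<^sub>M PiM Bs (\<lambda>_. borel)) (borel \<Otimes>\<^sub>M PiM {..<D} (\<lambda>_. borel))"
  unfolding Phi2_def[abs_def] by measurable

end


context prop3 begin

lemma Phi2_eq: "\<omega> \<in> space M \<Longrightarrow> Phi2 (\<Sum>i\<le>D. Y i \<omega>, restrict (\<lambda>s. V s \<omega>) Bs) = (Wf \<omega>, Xf \<omega>)"
proof -
  have nf: "Nf (restrict (\<lambda>s. V s \<omega>) Bs) i = N i \<omega>" if "i \<le> D" for i
    using that by (simp add: Nf_def)
  have pf: "Pf (restrict (\<lambda>s. V s \<omega>) Bs) i = (\<Sum>j=1..N i \<omega>. F i j \<omega>)" if "i \<le> D" for i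
    using that unfolding Pf_def nf[OF that] by (intro sum.cong) auto
  have s1: "(\<Sum>i\<le>D. Pf (restrict (\<lambda>s. V s \<omega>) Bs) i) = (\<Sum>i\<le>D. \<Sum>j=1..N i \<omega>. F i j \<omega>)"
    by (rule sum.cong[OF refl]) (rule pf, simp)
  have c: "(\<forall>k\<le>D. Nf (restrict (\<lambda>s. V s \<omega>) Bs) k = 0) \<longleftrightarrow> (\<Sum>k\<le>D. N k \<omega>) = 0"
    using nf by auto
  have comp: "(\<lambda>i\<in>{..<D}. if (\<forall>k\<le>D. Nf (restrict (\<lambda>s. V s \<omega>) Bs) k = 0) then 0
        else Pf (restrict (\<lambda>s. V s \<omega>) Bs) i / (\<Sum>i\<le>D. \<Sum>j=1..N i \<omega>. F i j \<omega>))
      = (\<lambda>i\<in>{..<D}. if (\<Sum>k\<le>D. N k \<omega>) = 0 then 0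
        else (\<Sum>j=1..N i \<omega>. F i j \<omega>) / (\<Sum>k\<le>D. \<Sum>j=1..N k \<omega>. F k j \<omega>))"
  proof (rule restrict_ext)
    fix i assume "i \<in> {..<D}" then have "i \<le> D" by simp
    show "(if (\<forall>k\<le>D. Nf (restrict (\<lambda>s. V s \<omega>) Bs) k = 0) then 0
        else Pf (restrict (\<lambda>s. V s \<omega>) Bs) i / (\<Sum>i\<le>D. \<Sum>j=1..N i \<omega>. F i j \<omega>))
      = (if (\<Sum>k\<le>D. N k \<omega>) = 0 then 0
        else (\<Sum>j=1..N i \<omega>. F i j \<omega>) / (\<Sum>k\<le>D. \<Sum>j=1..N k \<omega>. F k j \<omega>))"
      by (simp only: pf[OF \<open>i \<le> D\<close>] c)
  qed
  show ?thesis unfolding Phi2_def Wf_def Xf_def fst_conv snd_conv s1 comp ..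
qed

lemma C2:
  assumes A: "A \<in> sets (PiM {..<D} (\<lambda>_. borel))" and C: "C \<in> sets (borel \<Otimes>\<^sub>M PiM {..<D} (\<lambda>_. borel))"
  shows "prob {\<omega>\<in>space M. (\<lambda>i\<in>{..<D}. Y i \<omega> / (\<Sum>k\<le>D. Y k \<omega>)) \<in> A \<and> (Wf \<omega>, Xf \<omega>) \<in> C}
    = prob {\<omega>\<in>space M. (\<lambda>i\<in>{..<D}. Y i \<omega> / (\<Sum>k\<le>D. Y k \<omega>)) \<in> A} * prob {\<omega>\<in>space M. (Wf \<omega>, Xf \<omega>) \<in> C}"
proof -
  let ?X = "\<lambda>\<omega>. \<lambda>i\<in>{..<D}. Y i \<omega> / (\<Sum>k\<le>D. Y k \<omega>)"
  let ?S = "\<lambda>\<omega>. \<Sum>k\<le>D. Y k \<omega>"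
  let ?ZY = "\<lambda>\<omega>. restrict (\<lambda>s. V s \<omega>) (SY ` {..D})"
  let ?ZG = "\<lambda>\<omega>. restrict (\<lambda>s. V s \<omega>) Bs"
  have split: "indep2 (PiM (SY ` {..D}) (\<lambda>_. borel)) ?ZY (PiM Bs (\<lambda>_. borel)) ?ZG"
    by (rule indep_var_imp_indep2, rule indep_var_restrict[OF indV]) (auto simp: Bs_def I_def)
  have core: "indep2 borel ?S (PiM {..<D} (\<lambda>_. borel)) ?X"
    by (rule dirichlet_core[OF indY Y_distr]) (auto intro: less_imp_le \<alpha>_pos)
  have [measurable]: "i \<le> D \<Longrightarrow> (\<lambda>z::src\<Rightarrow>real. z (SY i)) \<in> borel_measurable (PiM (SY ` {..D}) (\<lambda>_. borel))" for i
    by (rule comp_meas_src) auto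
  have f: "(\<lambda>z::src\<Rightarrow>real. (\<lambda>i\<in>{..<D}. z (SY i) / (\<Sum>k\<le>D. z (SY k)), \<Sum>k\<le>D. z (SY k)))
      \<in> measurable (PiM (SY ` {..D}) (\<lambda>_. borel)) (PiM {..<D} (\<lambda>_. borel) \<Otimes>\<^sub>M borel)"
    by measurable
  have P1: "indep2 (PiM {..<D} (\<lambda>_. borel) \<Otimes>\<^sub>M borel) (\<lambda>\<omega>. (?X \<omega>, ?S \<omega>)) (PiM Bs (\<lambda>_. borel)) ?ZG"
  proof -
    have "indep2 (PiM {..<D} (\<lambda>_. borel) \<Otimes>\<^sub>M borel)
      (\<lambda>\<omega>. (\<lambda>z::src\<Rightarrow>real. (\<lambda>i\<in>{..<D}. z (SY i) / (\<Sum>k\<le>D. z (SY k)), \<Sum>k\<le>D. z (SY k))) (?ZY \<omega>))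
      (PiM Bs (\<lambda>_. borel)) (\<lambda>\<omega>. id (?ZG \<omega>))"
      by (rule indep2_compose[OF split f]) simp
    then show ?thesis
    proof (rule indep2_AE_cong)
      have e: "(\<Sum>k\<le>D. restrict (\<lambda>s. V s \<omega>) (SY ` {..D}) (SY k)) = (\<Sum>k\<le>D. Y k \<omega>)" for \<omega>
        by (rule sum.cong) auto
      show "AE \<omega> in M. (\<lambda>z::src\<Rightarrow>real. (\<lambda>i\<in>{..<D}. z (SY i) / (\<Sum>k\<le>D. z (SY k)), \<Sum>k\<le>D. z (SY k))) (?ZY \<omega>) = (?X \<omega>, ?S \<omega>)"
        by (rule AE_I2) (auto simp: e intro!: restrict_ext)
      show "AE \<omega> in M. id (?ZG \<omega>) = ?ZG \<omega>" by simp
    qed (use indep2_rv[OF split] in measurable)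
  qed
  have P2: "indep2 (PiM {..<D} (\<lambda>_. borel)) ?X (borel \<Otimes>\<^sub>M PiM Bs (\<lambda>_. borel)) (\<lambda>\<omega>. (?S \<omega>, ?ZG \<omega>))"
    by (rule indep2_triA[OF indep2_symm[OF core] P1])
  have P3: "indep2 (PiM {..<D} (\<lambda>_. borel)) (\<lambda>\<omega>. id (?X \<omega>)) (borel \<Otimes>\<^sub>M PiM {..<D} (\<lambda>_. borel)) (\<lambda>\<omega>. Phi2 (?S \<omega>, ?ZG \<omega>))"
    by (rule indep2_compose[OF P2 _ Phi2_meas]) simp
  have P4: "indep2 (PiM {..<D} (\<lambda>_. borel)) ?X (borel \<Otimes>\<^sub>M PiM {..<D} (\<lambda>_. borel)) (\<lambda>\<omega>. (Wf \<omega>, Xf \<omega>))"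
  proof (rule indep2_AE_cong[OF P3])
    show "AE \<omega> in M. id (?X \<omega>) = ?X \<omega>" by simp
    show "AE \<omega> in M. Phi2 (?S \<omega>, ?ZG \<omega>) = (Wf \<omega>, Xf \<omega>)" by (rule AE_I2) (rule Phi2_eq)
    show "random_variable (PiM {..<D} (\<lambda>_. borel)) ?X" by measurable
    have "random_variable (borel \<Otimes>\<^sub>M PiM {..<D} (\<lambda>_. borel)) (\<lambda>\<omega>. Phi2 (?S \<omega>, ?ZG \<omega>))"
      using indep2_rv[OF P3] by simp
    then show "random_variable (borel \<Otimes>\<^sub>M PiM {..<D} (\<lambda>_. borel)) (\<lambda>\<omega>. (Wf \<omega>, Xf \<omega>))"
      by (rule measurable_cong[THEN iffD1, rotated]) (simp add: Phi2_eq)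
  qed
  show ?thesis by (rule indep2D[OF P4 A C])
qed

end


context prop3 begin

definition "nj m j k = (if k < D then j k else m - (\<Sum>i<D. j i))"

lemma nj_sum: "j \<in> Tset D m \<Longrightarrow> (\<Sum>k\<le>D. nj m j k) = m"
proof -
  assume j: "j \<in> Tset D m"
  have "(\<Sum>k\<le>D. nj m j k) = (\<Sum>k<D. nj m j k) + nj m j D" by (simp add: lessThan_Suc_atMost[symmetric])
  also have "(\<Sum>k<D. nj m j k) = (\<Sum>k<D. j k)" by (rule sum.cong) (auto simp: nj_def)
  finally show ?thesis using j by (simp add: nj_def Tset_def)
qed

lemma Nvec_meas[measurable]: "Measurable.pred M (\<lambda>\<omega>. \<forall>k\<le>D. N k \<omega> = c k)"
proof -
  have "Measurable.pred M (\<lambda>\<omega>. \<forall>k\<in>{..D}. N k \<omega> = c k)" by measurable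
  then show ?thesis by (simp add: atMost_iff[symmetric] del: atMost_iff)
qed

lemma PART:
  assumes Q: "{\<omega>\<in>space M. Q \<omega>} \<in> events"
  shows "prob {\<omega>\<in>space M. Q \<omega> \<and> (\<Sum>k\<le>D. N k \<omega>) = m} = (\<Sum>j\<in>Tset D m. prob {\<omega>\<in>space M. Q \<omega> \<and> (\<forall>k\<le>D. N k \<omega> = nj m j k)})"
proof -
  let ?E = "\<lambda>j. {\<omega>\<in>space M. Q \<omega> \<and> (\<forall>k\<le>D. N k \<omega> = nj m j k)}"
  have "{\<omega>\<in>space M. Q \<omega> \<and> (\<Sum>k\<le>D. N k \<omega>) = m} = (\<Union>j\<in>Tset D m. ?E j)"
  proof (intro equalityI subsetI)
    fix \<omega> assume "\<omega> \<in> {\<omega>\<in>space M. Q \<omega> \<and> (\<Sum>k\<le>D. N k \<omega>) = m}"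
    then have \<omega>: "\<omega> \<in> space M" "Q \<omega>" "(\<Sum>k\<le>D. N k \<omega>) = m" by auto
    define j where "j i = (if i < D then N i \<omega> else 0)" for i
    have sj: "(\<Sum>i<D. j i) = (\<Sum>i<D. N i \<omega>)" by (rule sum.cong) (auto simp: j_def)
    have tot: "(\<Sum>k\<le>D. N k \<omega>) = (\<Sum>i<D. N i \<omega>) + N D \<omega>" by (simp add: lessThan_Suc_atMost[symmetric])
    have jT: "j \<in> Tset D m" using \<omega>(3) tot sj by (auto simp: Tset_def j_def)
    have "\<forall>k\<le>D. N k \<omega> = nj m j k"
    proof (intro allI impI)
      fix k assume "k \<le> D"
      then show "N k \<omega> = nj m j k" using \<omega>(3) tot sj by (cases "k < D") (auto simp: nj_def j_def)
    qed
    then show "\<omega> \<in> (\<Union>j\<in>Tset D m. ?E j)" using jT \<omega> by blast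
  next
    fix \<omega> assume "\<omega> \<in> (\<Union>j\<in>Tset D m. ?E j)"
    then obtain j where "j \<in> Tset D m" "\<omega> \<in> space M" "Q \<omega>" "\<forall>k\<le>D. N k \<omega> = nj m j k" by auto
    then show "\<omega> \<in> {\<omega>\<in>space M. Q \<omega> \<and> (\<Sum>k\<le>D. N k \<omega>) = m}" using nj_sum[of j] by simp
  qed
  moreover have "prob (\<Union>j\<in>Tset D m. ?E j) = (\<Sum>j\<in>Tset D m. prob (?E j))"
  proof (rule finite_measure_finite_Union)
    show "finite (Tset D m)" by (rule Tset_finite)
    show "?E ` Tset D m \<subseteq> events" using Q by auto
    show "disjoint_family_on ?E (Tset D m)"
    unfolding disjoint_family_on_def
    proof (intro ballI impI)
      fix j j' assume j: "j \<in> Tset D m" and j': "j' \<in> Tset D m" and ne: "j \<noteq> j'"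
      then obtain i where i: "j i \<noteq> j' i" by auto
      have "i < D"
      proof (rule ccontr)
        assume "\<not> i < D" then have "D \<le> i" by simp
        then show False using i j j' by (auto simp: Tset_def)
      qed
      then have "nj m j i \<noteq> nj m j' i" using i by (simp add: nj_def)
      then show "?E j \<inter> ?E j' = {}" using \<open>i < D\<close> by auto
    qed
  qed
  ultimately show ?thesis by simp
qed

lemma Xf_space: "Xf \<omega> \<in> space (PiM {..<D} (\<lambda>_. borel))"
  by (simp add: Xf_def space_PiM)

lemma Xpn_space: "Xpn n \<omega> \<in> space (PiM {..<D} (\<lambda>_. borel))"
  by (simp add: Xpn_def space_PiM)

lemma ZG_meas[measurable]: "random_variable (PiM Bs (\<lambda>_. borel)) (\<lambda>\<omega>. restrict (\<lambda>s. V s \<omega>) Bs)"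
  by (rule measurable_restrict) (rule Vm, auto simp: Bs_def I_def)

lemma WXf_meas[measurable]: "random_variable (borel \<Otimes>\<^sub>M PiM {..<D} (\<lambda>_. borel)) (\<lambda>\<omega>. (Wf \<omega>, Xf \<omega>))"
proof -
  have "random_variable (borel \<Otimes>\<^sub>M PiM {..<D} (\<lambda>_. borel)) (\<lambda>\<omega>. Phi2 (\<Sum>i\<le>D. Y i \<omega>, restrict (\<lambda>s. V s \<omega>) Bs))"
    using Phi2_meas by measurable
  then show ?thesis by (rule measurable_cong[THEN iffD1, rotated]) (simp add: Phi2_eq)
qed

lemma Wf_meas[measurable]: "random_variable borel Wf"
  using measurable_compose[OF WXf_meas measurable_fst] by (simp add: comp_def)

lemma Xf_meas[measurable]: "random_variable (PiM {..<D} (\<lambda>_. borel)) Xf"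
  using measurable_compose[OF WXf_meas measurable_snd] by (simp add: comp_def)

end


context prop3 begin

lemma prob_Wn: "A \<in> sets borel \<Longrightarrow> prob {\<omega>\<in>space M. Wn n \<omega> \<in> A} = measure (beta_measure (\<Sum>i\<le>D. \<alpha> i) (real (\<Sum>i\<le>D. n i))) A"
proof -
  assume A: "A \<in> sets borel"
  have "prob {\<omega>\<in>space M. Wn n \<omega> \<in> A} = measure (distr M borel (Wn n)) A"
    by (subst measure_distr[OF Wn_meas A]) (auto intro!: arg_cong[where f=prob])
  then show ?thesis unfolding Wn_law .
qed

lemma prob_Xpn: "B \<in> sets (PiM {..<D} (\<lambda>_. borel)) \<Longrightarrow> prob {\<omega>\<in>space M. Xpn n \<omega> \<in> B} = measure (dirichlet_measure D (\<lambda>i. real (n i))) B"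
proof -
  assume B: "B \<in> sets (PiM {..<D} (\<lambda>_. borel))"
  have "prob {\<omega>\<in>space M. Xpn n \<omega> \<in> B} = measure (distr M (PiM {..<D} (\<lambda>_. borel)) (Xpn n)) B"
    by (subst measure_distr[OF Xpn_meas B]) (auto intro!: arg_cong[where f=prob])
  then show ?thesis unfolding Xpn_law .
qed

lemma condA: "A \<in> sets borel \<Longrightarrow> prob {\<omega>\<in>space M. Wf \<omega> \<in> A \<and> (\<forall>k\<le>D. N k \<omega> = n k)}
   = measure (beta_measure (\<Sum>i\<le>D. \<alpha> i) (real (\<Sum>i\<le>D. n i))) A * prob {\<omega>\<in>space M. \<forall>k\<le>D. N k \<omega> = n k}"
proof -
  assume A: "A \<in> sets borel"
  have C: "A \<times> space (PiM {..<D} (\<lambda>_. borel :: real measure)) \<in> sets (borel \<Otimes>\<^sub>M PiM {..<D} (\<lambda>_. borel))" using A by auto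
  from COND[OF C, of n] show ?thesis using Xf_space Xpn_space by (simp add: prob_Wn[OF A])
qed

lemma condB: "B \<in> sets (PiM {..<D} (\<lambda>_. borel)) \<Longrightarrow> prob {\<omega>\<in>space M. Xf \<omega> \<in> B \<and> (\<forall>k\<le>D. N k \<omega> = n k)}
   = measure (dirichlet_measure D (\<lambda>i. real (n i))) B * prob {\<omega>\<in>space M. \<forall>k\<le>D. N k \<omega> = n k}"
proof -
  assume B: "B \<in> sets (PiM {..<D} (\<lambda>_. borel))"
  have C: "UNIV \<times> B \<in> sets (borel \<Otimes>\<^sub>M PiM {..<D} (\<lambda>_. borel))" using B by auto
  from COND[OF C, of n] show ?thesis by (simp add: prob_Xpn[OF B])
qed

lemma condAB: "A \<in> sets borel \<Longrightarrow> B \<in> sets (PiM {..<D} (\<lambda>_. borel)) \<Longrightarrow>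
  prob {\<omega>\<in>space M. Wf \<omega> \<in> A \<and> Xf \<omega> \<in> B \<and> (\<forall>k\<le>D. N k \<omega> = n k)}
   = measure (beta_measure (\<Sum>i\<le>D. \<alpha> i) (real (\<Sum>i\<le>D. n i))) A * measure (dirichlet_measure D (\<lambda>i. real (n i))) B
     * prob {\<omega>\<in>space M. \<forall>k\<le>D. N k \<omega> = n k}"
proof -
  assume A: "A \<in> sets borel" and B: "B \<in> sets (PiM {..<D} (\<lambda>_. borel))"
  have C: "A \<times> B \<in> sets (borel \<Otimes>\<^sub>M PiM {..<D} (\<lambda>_. borel))" using A B by auto
  have e: "prob {\<omega>\<in>space M. Wn n \<omega> \<in> A \<and> Xpn n \<omega> \<in> B} = prob {\<omega>\<in>space M. Wn n \<omega> \<in> A} * prob {\<omega>\<in>space M. Xpn n \<omega> \<in> B}"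
    by (rule indep2D[OF Wn_Xpn_indep A B])
  from COND[OF C, of n] show ?thesis by (simp add: e prob_Wn[OF A] prob_Xpn[OF B] conj_assoc)
qed

lemma C6: "B \<in> sets (PiM {..<D} (\<lambda>_. borel)) \<Longrightarrow> prob {\<omega>\<in>space M. Xf \<omega> \<in> B \<and> (\<forall>k\<le>D. N k \<omega> = n k)}
   = measure (dirichlet_measure D (\<lambda>k. real (n k))) B * prob {\<omega>\<in>space M. \<forall>k\<le>D. N k \<omega> = n k}"
  by (rule condB)

lemma C5: "A \<in> sets borel \<Longrightarrow> prob {\<omega>\<in>space M. Wf \<omega> \<in> A \<and> (\<Sum>k\<le>D. N k \<omega>) = m}
   = measure (beta_measure (\<Sum>i\<le>D. \<alpha> i) (real m)) A * prob {\<omega>\<in>space M. (\<Sum>k\<le>D. N k \<omega>) = m}"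
proof -
  assume A: "A \<in> sets borel"
  have "prob {\<omega>\<in>space M. Wf \<omega> \<in> A \<and> (\<Sum>k\<le>D. N k \<omega>) = m} = (\<Sum>j\<in>Tset D m. prob {\<omega>\<in>space M. Wf \<omega> \<in> A \<and> (\<forall>k\<le>D. N k \<omega> = nj m j k)})"
    by (rule PART) (use A in measurable)
  also have "\<dots> = (\<Sum>j\<in>Tset D m. measure (beta_measure (\<Sum>i\<le>D. \<alpha> i) (real m)) A * prob {\<omega>\<in>space M. \<forall>k\<le>D. N k \<omega> = nj m j k})"
    by (rule sum.cong[OF refl]) (simp add: condA[OF A] nj_sum)
  also have "\<dots> = measure (beta_measure (\<Sum>i\<le>D. \<alpha> i) (real m)) A * (\<Sum>j\<in>Tset D m. prob {\<omega>\<in>space M. True \<and> (\<forall>k\<le>D. N k \<omega> = nj m j k)})"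
    by (simp add: sum_distrib_left)
  also have "(\<Sum>j\<in>Tset D m. prob {\<omega>\<in>space M. True \<and> (\<forall>k\<le>D. N k \<omega> = nj m j k)}) = prob {\<omega>\<in>space M. True \<and> (\<Sum>k\<le>D. N k \<omega>) = m}"
    by (rule PART[symmetric]) simp
  finally show ?thesis by simp
qed

lemma C4: "A \<in> sets borel \<Longrightarrow> B \<in> sets (PiM {..<D} (\<lambda>_. borel)) \<Longrightarrow>
    prob {\<omega>\<in>space M. Wf \<omega> \<in> A \<and> Xf \<omega> \<in> B \<and> (\<Sum>k\<le>D. N k \<omega>) = m} * prob {\<omega>\<in>space M. (\<Sum>k\<le>D. N k \<omega>) = m}
  = prob {\<omega>\<in>space M. Wf \<omega> \<in> A \<and> (\<Sum>k\<le>D. N k \<omega>) = m} * prob {\<omega>\<in>space M. Xf \<omega> \<in> B \<and> (\<Sum>k\<le>D. N k \<omega>) = m}"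
proof -
  assume A: "A \<in> sets borel" and B: "B \<in> sets (PiM {..<D} (\<lambda>_. borel))"
  let ?b = "measure (beta_measure (\<Sum>i\<le>D. \<alpha> i) (real m)) A"
  have "prob {\<omega>\<in>space M. Wf \<omega> \<in> A \<and> Xf \<omega> \<in> B \<and> (\<Sum>k\<le>D. N k \<omega>) = m} = (\<Sum>j\<in>Tset D m. prob {\<omega>\<in>space M. (Wf \<omega> \<in> A \<and> Xf \<omega> \<in> B) \<and> (\<forall>k\<le>D. N k \<omega> = nj m j k)})"
    using PART[of "\<lambda>\<omega>. Wf \<omega> \<in> A \<and> Xf \<omega> \<in> B" m] A B by (simp add: conj_assoc)
  also have "\<dots> = ?b * (\<Sum>j\<in>Tset D m. prob {\<omega>\<in>space M. Xf \<omega> \<in> B \<and> (\<forall>k\<le>D. N k \<omega> = nj m j k)})"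
    by (simp add: sum_distrib_left condAB[OF A B] condB[OF B] nj_sum mult.assoc conj_assoc)
  also have "(\<Sum>j\<in>Tset D m. prob {\<omega>\<in>space M. Xf \<omega> \<in> B \<and> (\<forall>k\<le>D. N k \<omega> = nj m j k)}) = prob {\<omega>\<in>space M. Xf \<omega> \<in> B \<and> (\<Sum>k\<le>D. N k \<omega>) = m}"
    by (rule PART[symmetric]) (use B in measurable)
  finally show ?thesis using C5[OF A, of m] by (simp add: mult_ac)
qed

end


lemma prod4:
  fixes a b c d :: "nat \<Rightarrow> real"
  shows "(\<Prod>k\<in>A. a k * b k / c k * d k) = (\<Prod>k\<in>A. a k) * (\<Prod>k\<in>A. b k) / (\<Prod>k\<in>A. c k) * (\<Prod>k\<in>A. d k)"
  by (simp add: prod.distrib prod_dividef)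

context prop3 begin

definition "Lsum = (\<Sum>k\<le>D. lam k)"

definition "cj m j = fact m / ((\<Prod>i<D. fact (j i)) * fact (m - (\<Sum>i<D. j i)))
               * (\<Prod>i<D. (lam i / Lsum) ^ j i)
               * (lam D / Lsum) ^ (m - (\<Sum>i<D. j i))"

lemma pois_identity:
  assumes j: "j \<in> Tset D m"
  shows "(\<Prod>k\<le>D. (lam k / 2) ^ nj m j k / fact (nj m j k) * exp (- lam k / 2))
    = exp (- Lsum / 2) * (Lsum / 2) ^ m / fact m * cj m j"
proof -
  have L: "0 < Lsum" using lam_sum_pos by (simp add: Lsum_def)
  define s where "s = (\<Sum>i<D. j i)"
  define r where "r = m - s"
  have sm: "s + r = m" using j by (simp add: Tset_def s_def r_def)
  have pk: "(lam k / 2) ^ e / fact e * exp (- lam k / 2) = (Lsum / 2) ^ e * (lam k / Lsum) ^ e / fact e * exp (- lam k / 2)" for k e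
  proof -
    have h: "lam k / 2 = (Lsum / 2) * (lam k / Lsum)" using L by (simp add: field_simps)
    have "(lam k / 2) ^ e = (Lsum / 2) ^ e * (lam k / Lsum) ^ e" by (subst h) (rule power_mult_distrib)
    then show ?thesis by simp
  qed
  have "(\<Prod>k\<le>D. (lam k / 2) ^ nj m j k / fact (nj m j k) * exp (- lam k / 2))
      = (\<Prod>k<D. (lam k / 2) ^ j k / fact (j k) * exp (- lam k / 2)) * ((lam D / 2) ^ r / fact r * exp (- lam D / 2))"
  proof -
    have "(\<Prod>k\<le>D. (lam k / 2) ^ nj m j k / fact (nj m j k) * exp (- lam k / 2))
        = (\<Prod>k<D. (lam k / 2) ^ nj m j k / fact (nj m j k) * exp (- lam k / 2)) * ((lam D / 2) ^ nj m j D / fact (nj m j D) * exp (- lam D / 2))"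
      by (simp add: lessThan_Suc_atMost[symmetric])
    also have "(\<Prod>k<D. (lam k / 2) ^ nj m j k / fact (nj m j k) * exp (- lam k / 2)) = (\<Prod>k<D. (lam k / 2) ^ j k / fact (j k) * exp (- lam k / 2))"
      by (rule prod.cong) (auto simp: nj_def)
    finally show ?thesis by (simp add: nj_def r_def s_def)
  qed
  also have "\<dots> = ((Lsum / 2) ^ s * (\<Prod>k<D. (lam k / Lsum) ^ j k) / (\<Prod>k<D. fact (j k)) * exp (- (\<Sum>k<D. lam k) / 2))
       * ((Lsum / 2) ^ r * (lam D / Lsum) ^ r / fact r * exp (- lam D / 2))"
  proof -
    have "(\<Prod>k<D. (lam k / 2) ^ j k / fact (j k) * exp (- lam k / 2)) = (\<Prod>k<D. (Lsum / 2) ^ j k * (lam k / Lsum) ^ j k / fact (j k) * exp (- lam k / 2))"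
      by (rule prod.cong[OF refl]) (rule pk)
    also have "\<dots> = (\<Prod>k<D. (Lsum / 2) ^ j k) * (\<Prod>k<D. (lam k / Lsum) ^ j k) / (\<Prod>k<D. fact (j k)) * (\<Prod>k<D. exp (- lam k / 2))"
      by (rule prod4)
    also have "(\<Prod>k<D. (Lsum / 2) ^ j k) = (Lsum / 2) ^ s" by (simp add: s_def power_sum)
    also have "(\<Prod>k<D. exp (- lam k / 2)) = exp (- (\<Sum>k<D. lam k) / 2)"
      by (simp add: exp_sum[symmetric] sum_negf sum_divide_distrib)
    finally have X: "(\<Prod>k<D. (lam k / 2) ^ j k / fact (j k) * exp (- lam k / 2)) =
       (Lsum / 2) ^ s * (\<Prod>k<D. (lam k / Lsum) ^ j k) / (\<Prod>k<D. fact (j k)) * exp (- (\<Sum>k<D. lam k) / 2)" .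
    show ?thesis by (simp only: X pk[of D r])
  qed
  also have "\<dots> = exp (- Lsum / 2) * (Lsum / 2) ^ m / fact m * cj m j"
  proof -
    have eL: "exp (- (\<Sum>k<D. lam k) / 2) * exp (- lam D / 2) = exp (- Lsum / 2)"
      by (simp add: Lsum_def lessThan_Suc_atMost[symmetric] exp_add[symmetric] field_simps)
    have pL: "(Lsum / 2) ^ s * (Lsum / 2) ^ r = (Lsum / 2) ^ m" using sm by (simp add: power_add[symmetric])
    have fm: "fact m \<noteq> (0::real)" by simp
    show ?thesis unfolding cj_def s_def[symmetric] r_def[symmetric]
      using eL pL fm by (simp add: field_simps)
  qed
  finally show ?thesis .
qed

lemma cj_sum: "(\<Sum>j\<in>Tset D m. cj m j) = 1"
proof -
  have L: "0 < Lsum" using lam_sum_pos by (simp add: Lsum_def)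
  have "(\<Sum>j\<in>Tset D m. cj m j) = ((\<Sum>i<D. lam i / Lsum) + lam D / Lsum) ^ m"
    unfolding cj_def by (rule multinomial_T)
  also have "(\<Sum>i<D. lam i / Lsum) + lam D / Lsum = 1"
  proof -
    have "(\<Sum>i<D. lam i / Lsum) + lam D / Lsum = ((\<Sum>i<D. lam i) + lam D) / Lsum"
      by (simp add: sum_divide_distrib add_divide_distrib)
    also have "(\<Sum>i<D. lam i) + lam D = Lsum" by (simp add: Lsum_def lessThan_Suc_atMost[symmetric])
    finally show ?thesis using L by simp
  qed
  finally show ?thesis by simp
qed

end


context prop3 begin

lemma C7:
  assumes B: "B \<in> sets (PiM {..<D} (\<lambda>_. borel))"
  shows "prob {\<omega>\<in>space M. Xf \<omega> \<in> B \<and> (\<Sum>k\<le>D. N k \<omega>) = m} = prob {\<omega>\<in>space M. (\<Sum>k\<le>D. N k \<omega>) = m} *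
    (\<Sum>j\<in>Tset D m. cj m j * measure (dirichlet_measure D (\<lambda>i. if i < D then real (j i) else real (m - (\<Sum>i<D. j i)))) B)"
proof -
  define K where "K = exp (- Lsum / 2) * (Lsum / 2) ^ m / fact m"
  have fe: "(\<lambda>i. real (nj m j i)) = (\<lambda>i. if i < D then real (j i) else real (m - (\<Sum>i<D. j i)))" for j
    by (auto simp: nj_def fun_eq_iff)
  have pN: "prob {\<omega>\<in>space M. \<forall>k\<le>D. N k \<omega> = nj m j k} = K * cj m j" if "j \<in> Tset D m" for j
    unfolding N_joint K_def using pois_identity[OF that] by simp
  have "prob {\<omega>\<in>space M. Xf \<omega> \<in> B \<and> (\<Sum>k\<le>D. N k \<omega>) = m} = (\<Sum>j\<in>Tset D m. prob {\<omega>\<in>space M. Xf \<omega> \<in> B \<and> (\<forall>k\<le>D. N k \<omega> = nj m j k)})"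
    by (rule PART) (use B in measurable)
  also have "\<dots> = (\<Sum>j\<in>Tset D m. measure (dirichlet_measure D (\<lambda>i. if i < D then real (j i) else real (m - (\<Sum>i<D. j i)))) B * (K * cj m j))"
    by (rule sum.cong[OF refl]) (simp add: condB[OF B] pN fe)
  also have "\<dots> = K * (\<Sum>j\<in>Tset D m. cj m j * measure (dirichlet_measure D (\<lambda>i. if i < D then real (j i) else real (m - (\<Sum>i<D. j i)))) B)"
    by (simp add: sum_distrib_left mult_ac)
  also have "K = prob {\<omega>\<in>space M. (\<Sum>k\<le>D. N k \<omega>) = m}"
  proof -
    have "prob {\<omega>\<in>space M. True \<and> (\<Sum>k\<le>D. N k \<omega>) = m} = (\<Sum>j\<in>Tset D m. prob {\<omega>\<in>space M. True \<and> (\<forall>k\<le>D. N k \<omega> = nj m j k)})"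
      by (rule PART) simp
    also have "\<dots> = (\<Sum>j\<in>Tset D m. K * cj m j)" by (rule sum.cong[OF refl]) (simp add: pN)
    also have "\<dots> = K" by (simp add: sum_distrib_left[symmetric] cj_sum)
    finally show ?thesis by simp
  qed
  finally show ?thesis .
qed

end

theorem proposition3:
  fixes P :: "'a measure"
    and D :: nat
    and \<alpha> lam :: "nat \<Rightarrow> real"
    and Y :: "nat \<Rightarrow> 'a \<Rightarrow> real"
    and N :: "nat \<Rightarrow> 'a \<Rightarrow> nat"
    and F :: "nat \<Rightarrow> nat \<Rightarrow> 'a \<Rightarrow> real"
    and W :: "'a \<Rightarrow> real"
    and X X' Xpnc :: "'a \<Rightarrow> nat \<Rightarrow> real"
  assumes "prob_space P"
    and "D \<ge> 2"
    and \<alpha>_pos: "\<And>i. i \<le> D \<Longrightarrow> \<alpha> i > 0"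
    and lam_nonneg: "\<And>i. i \<le> D \<Longrightarrow> lam i \<ge> 0"
    and lam_sum_pos: "(\<Sum>i\<le>D. lam i) > 0"
    and indep: "prob_space.indep_vars P (\<lambda>_. borel)
        (\<lambda>s \<omega>. case s of SY i \<Rightarrow> Y i \<omega> | SM i \<Rightarrow> real (N i \<omega>) | SF i j \<Rightarrow> F i j \<omega>)
        (SY ` {..D} \<union> SM ` {..D} \<union> {SF i j | i j. i \<le> D \<and> j \<ge> 1})"
    and Y_distr: "\<And>i. i \<le> D \<Longrightarrow> distr P borel (Y i) = chi2_measure (\<alpha> i)"
    and N_distr: "\<And>i k. i \<le> D \<Longrightarrow>
        measure P {\<omega> \<in> space P. N i \<omega> = k} = (lam i / 2) ^ k / fact k * exp (- lam i / 2)"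
    and F_distr: "\<And>i j. i \<le> D \<Longrightarrow> j \<ge> 1 \<Longrightarrow> distr P borel (F i j) = chi2_measure 1"
    and W_def: "W \<equiv> (\<lambda>\<omega>. (\<Sum>i\<le>D. Y i \<omega>) /
        ((\<Sum>i\<le>D. Y i \<omega>) + (\<Sum>i\<le>D. \<Sum>j=1..N i \<omega>. F i j \<omega>)))"
    and X_def: "X \<equiv> (\<lambda>\<omega>. \<lambda>i\<in>{..<D}. Y i \<omega> / (\<Sum>k\<le>D. Y k \<omega>))"
    and X'_def: "X' \<equiv> (\<lambda>\<omega>. \<lambda>i\<in>{..<D}. (Y i \<omega> + (\<Sum>j=1..N i \<omega>. F i j \<omega>)) /
        (\<Sum>k\<le>D. Y k \<omega> + (\<Sum>j=1..N k \<omega>. F k j \<omega>)))"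
    and Xpnc_def: "Xpnc \<equiv> (\<lambda>\<omega>. \<lambda>i\<in>{..<D}. if (\<Sum>k\<le>D. N k \<omega>) = 0 then 0
        else (\<Sum>j=1..N i \<omega>. F i j \<omega>) / (\<Sum>k\<le>D. \<Sum>j=1..N k \<omega>. F k j \<omega>))"
  shows
    "(AE \<omega> in P. \<forall>i<D. X' \<omega> i = W \<omega> * X \<omega> i + (1 - W \<omega>) * Xpnc \<omega> i)
     \<and> (\<forall>A\<in>sets (PiM {..<D} (\<lambda>_. borel)). \<forall>C\<in>sets (borel \<Otimes>\<^sub>M PiM {..<D} (\<lambda>_. borel)).
          measure P {\<omega>\<in>space P. X \<omega> \<in> A \<and> (W \<omega>, Xpnc \<omega>) \<in> C}
          = measure P {\<omega>\<in>space P. X \<omega> \<in> A} * measure P {\<omega>\<in>space P. (W \<omega>, Xpnc \<omega>) \<in> C})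
     \<and> distr P (PiM {..<D} (\<lambda>_. borel)) X = dirichlet_measure D \<alpha>
     \<and> (\<forall>m::nat. \<forall>A\<in>sets borel. \<forall>B\<in>sets (PiM {..<D} (\<lambda>_. borel)).
          measure P {\<omega>\<in>space P. W \<omega> \<in> A \<and> Xpnc \<omega> \<in> B \<and> (\<Sum>k\<le>D. N k \<omega>) = m}
            * measure P {\<omega>\<in>space P. (\<Sum>k\<le>D. N k \<omega>) = m}
          = measure P {\<omega>\<in>space P. W \<omega> \<in> A \<and> (\<Sum>k\<le>D. N k \<omega>) = m}
            * measure P {\<omega>\<in>space P. Xpnc \<omega> \<in> B \<and> (\<Sum>k\<le>D. N k \<omega>) = m})
     \<and> (\<forall>m::nat. \<forall>A\<in>sets borel.
          measure P {\<omega>\<in>space P. W \<omega> \<in> A \<and> (\<Sum>k\<le>D. N k \<omega>) = m}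
          = measure (beta_measure (\<Sum>i\<le>D. \<alpha> i) (real m)) A
            * measure P {\<omega>\<in>space P. (\<Sum>k\<le>D. N k \<omega>) = m})
     \<and> (\<forall>n::nat \<Rightarrow> nat. \<forall>B\<in>sets (PiM {..<D} (\<lambda>_. borel)).
          measure P {\<omega>\<in>space P. Xpnc \<omega> \<in> B \<and> (\<forall>k\<le>D. N k \<omega> = n k)}
          = measure (dirichlet_measure D (\<lambda>k. real (n k))) B
            * measure P {\<omega>\<in>space P. \<forall>k\<le>D. N k \<omega> = n k})
     \<and> (\<forall>m::nat. \<forall>B\<in>sets (PiM {..<D} (\<lambda>_. borel)).
          measure P {\<omega>\<in>space P. Xpnc \<omega> \<in> B \<and> (\<Sum>k\<le>D. N k \<omega>) = m}
          = measure P {\<omega>\<in>space P. (\<Sum>k\<le>D. N k \<omega>) = m} *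
            (\<Sum>j\<in>{j::nat \<Rightarrow> nat. (\<forall>i\<ge>D. j i = 0) \<and> (\<Sum>i<D. j i) \<le> m}.
               fact m / ((\<Prod>i<D. fact (j i)) * fact (m - (\<Sum>i<D. j i)))
               * (\<Prod>i<D. (lam i / (\<Sum>k\<le>D. lam k)) ^ j i)
               * (lam D / (\<Sum>k\<le>D. lam k)) ^ (m - (\<Sum>i<D. j i))
               * measure (dirichlet_measure D
                   (\<lambda>i. if i < D then real (j i) else real (m - (\<Sum>i<D. j i)))) B))"
proof -
  have "prop3 P D \<alpha> lam Y N F"
    unfolding prop3_def prop3_axioms_def
    using assms(1) \<alpha>_pos lam_nonneg lam_sum_pos indep Y_distr N_distr F_distr by auto
  then interpret p: prop3 P D \<alpha> lam Y N F .
  have Weq: "W = p.Wf" unfolding W_def by (simp add: fun_eq_iff p.Wf_def)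
  have Xpnceq: "Xpnc = p.Xf" unfolding Xpnc_def by (simp add: fun_eq_iff p.Xf_def)
  have Xeq: "X = (\<lambda>\<omega>. \<lambda>i\<in>{..<D}. Y i \<omega> / (\<Sum>k\<le>D. Y k \<omega>))" unfolding X_def ..
  have c1: "AE \<omega> in P. \<forall>i<D. X' \<omega> i = W \<omega> * X \<omega> i + (1 - W \<omega>) * Xpnc \<omega> i"
    using p.C1
  proof (rule eventually_mono)
    fix \<omega> assume H: "\<forall>i<D.
   (Y i \<omega> + (\<Sum>j=1..N i \<omega>. F i j \<omega>)) / (\<Sum>k\<le>D. Y k \<omega> + (\<Sum>j=1..N k \<omega>. F k j \<omega>))
   = (\<Sum>i\<le>D. Y i \<omega>) / ((\<Sum>i\<le>D. Y i \<omega>) + (\<Sum>i\<le>D. \<Sum>j=1..N i \<omega>. F i j \<omega>)) * (Y i \<omega> / (\<Sum>k\<le>D. Y k \<omega>))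
     + (1 - (\<Sum>i\<le>D. Y i \<omega>) / ((\<Sum>i\<le>D. Y i \<omega>) + (\<Sum>i\<le>D. \<Sum>j=1..N i \<omega>. F i j \<omega>)))
       * (if (\<Sum>k\<le>D. N k \<omega>) = 0 then 0 else (\<Sum>j=1..N i \<omega>. F i j \<omega>) / (\<Sum>k\<le>D. \<Sum>j=1..N k \<omega>. F k j \<omega>))"
    show "\<forall>i<D. X' \<omega> i = W \<omega> * X \<omega> i + (1 - W \<omega>) * Xpnc \<omega> i"
      unfolding X'_def W_def X_def Xpnc_def using H by simp
  qed
  have c2: "\<forall>A\<in>sets (PiM {..<D} (\<lambda>_. borel)). \<forall>C\<in>sets (borel \<Otimes>\<^sub>M PiM {..<D} (\<lambda>_. borel)).
          measure P {\<omega>\<in>space P. X \<omega> \<in> A \<and> (W \<omega>, Xpnc \<omega>) \<in> C}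
          = measure P {\<omega>\<in>space P. X \<omega> \<in> A} * measure P {\<omega>\<in>space P. (W \<omega>, Xpnc \<omega>) \<in> C}"
    unfolding Weq Xpnceq Xeq using p.C2 by blast
  have c3: "distr P (PiM {..<D} (\<lambda>_. borel)) X = dirichlet_measure D \<alpha>"
    unfolding Xeq by (rule p.X_law)
  have c4: "\<forall>m::nat. \<forall>A\<in>sets borel. \<forall>B\<in>sets (PiM {..<D} (\<lambda>_. borel)).
          measure P {\<omega>\<in>space P. W \<omega> \<in> A \<and> Xpnc \<omega> \<in> B \<and> (\<Sum>k\<le>D. N k \<omega>) = m}
            * measure P {\<omega>\<in>space P. (\<Sum>k\<le>D. N k \<omega>) = m}
          = measure P {\<omega>\<in>space P. W \<omega> \<in> A \<and> (\<Sum>k\<le>D. N k \<omega>) = m}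
            * measure P {\<omega>\<in>space P. Xpnc \<omega> \<in> B \<and> (\<Sum>k\<le>D. N k \<omega>) = m}"
    unfolding Weq Xpnceq using p.C4 by blast
  have c5: "\<forall>m::nat. \<forall>A\<in>sets borel.
          measure P {\<omega>\<in>space P. W \<omega> \<in> A \<and> (\<Sum>k\<le>D. N k \<omega>) = m}
          = measure (beta_measure (\<Sum>i\<le>D. \<alpha> i) (real m)) A
            * measure P {\<omega>\<in>space P. (\<Sum>k\<le>D. N k \<omega>) = m}"
    unfolding Weq using p.C5 by blast
  have c6: "\<forall>n::nat \<Rightarrow> nat. \<forall>B\<in>sets (PiM {..<D} (\<lambda>_. borel)).
          measure P {\<omega>\<in>space P. Xpnc \<omega> \<in> B \<and> (\<forall>k\<le>D. N k \<omega> = n k)}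
          = measure (dirichlet_measure D (\<lambda>k. real (n k))) B
            * measure P {\<omega>\<in>space P. \<forall>k\<le>D. N k \<omega> = n k}"
    unfolding Xpnceq using p.C6 by blast
  have c7: "\<forall>m::nat. \<forall>B\<in>sets (PiM {..<D} (\<lambda>_. borel)).
          measure P {\<omega>\<in>space P. Xpnc \<omega> \<in> B \<and> (\<Sum>k\<le>D. N k \<omega>) = m}
          = measure P {\<omega>\<in>space P. (\<Sum>k\<le>D. N k \<omega>) = m} *
            (\<Sum>j\<in>{j::nat \<Rightarrow> nat. (\<forall>i\<ge>D. j i = 0) \<and> (\<Sum>i<D. j i) \<le> m}.
               fact m / ((\<Prod>i<D. fact (j i)) * fact (m - (\<Sum>i<D. j i)))
               * (\<Prod>i<D. (lam i / (\<Sum>k\<le>D. lam k)) ^ j i)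
               * (lam D / (\<Sum>k\<le>D. lam k)) ^ (m - (\<Sum>i<D. j i))
               * measure (dirichlet_measure D
                   (\<lambda>i. if i < D then real (j i) else real (m - (\<Sum>i<D. j i)))) B)"
    unfolding Xpnceq using p.C7 unfolding Tset_def p.cj_def p.Lsum_def by blast
  show ?thesis using c1 c2 c3 c4 c5 c6 c7 by blast
qed

end
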